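(* For every $n$-qubit density operator $\rho$, $$\Gamma(\rho)\ \ge\ 1+\frac{C(\rho)}{M_n}.$$ Consequently $\Gamma(\rho)^2\ge\bigl(1+C(\rho)/M_n\bigr)^2$.
   Context: Let $I,X,Y,Z$ be the Pauli matrices. For $(q,p)\in\mathbb{F}_2^2$ define the single-qubit phase-point operator $A_{(q,p)}=\tfrac12\bigl(I+(-1)^pX+(-1)^{q+p}Y+(-1)^qZ\bigr)$. For $n$ qubits and $\alpha=(\alpha_1,\dots,\alpha_n)\in(\mathbb{F}_2^2)^n$ set $A_\alpha=A_{\alpha_1}\otimes\cdots\otimes A_{\alpha_n}$. The discrete Wigner function of an $n$-qubit operator $\rho$ is $W_\rho(\alpha)=2^{-n}\mathrm{Tr}(\rho A_\alpha)$, regarded as a vector in $\mathbb{R}^{4^n}$. $\mathrm{Stab}_n$ denotes the set of pure $n$-qubit stabilizer states, i.e. density operators $|\psi\rangle\langle\psi|$ with $|\psi\rangle$ the unique common $+1$ eigenvector of an abelian subgroup of the $n$-qubit Pauli group of size $2^n$ (not containing $-I$). The free Wigner polytope is $\mathcal{W}_{\mathrm{free}}=\mathrm{conv}\{W_\sigma:\sigma\in\mathrm{Stab}_n\}$, and the Wigner distance is $C(\rho)=\min_{f\in\mathcal{W}_{\mathrm{free}}}\|W_\rho-f\|_1$. The stabilizer extent (for mixed states) is $\Gamma(\rho)=\min\{\sum_i|\alpha_i|:\rho=\sum_i\alpha_i\sigma_i,\ \alpha_i\in\mathbb{R},\ \sigma_i\in\mathrm{Stab}_n\}$ (finite sums).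 $M_n=\max_{\sigma\in\mathrm{Stab}_n}\|W_\sigma\|_1$. *)

theory Defs
  imports Complex_Main "Jordan_Normal_Form.Matrix"
begin

definition pauliX :: "complex mat" where
  "pauliX = mat 2 2 (\<lambda>(i,j). if i \<noteq> j then 1 else 0)"

definition pauliY :: "complex mat" where
  "pauliY = mat 2 2 (\<lambda>(i,j). if i = 0 \<and> j = 1 then - \<i> else if i = 1 \<and> j = 0 then \<i> else 0)"

definition pauliZ :: "complex mat" where
  "pauliZ = mat 2 2 (\<lambda>(i,j). if i = j then (if i = 0 then 1 else -1) else 0)"

definition kron :: "complex mat \<Rightarrow> complex mat \<Rightarrow> complex mat" where
  "kron A B = mat (dim_row A * dim_row B) (dim_col A * dim_col B)
     (\<lambda>(i,j). A $$ (i div dim_row B, j div dim_col B) * B $$ (i mod dim_row B, j mod dim_col B))"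

fun kron_list :: "complex mat list \<Rightarrow> complex mat" where
  "kron_list [] = 1\<^sub>m 1"
| "kron_list (A # As) = kron A (kron_list As)"

definition mtrace :: "complex mat \<Rightarrow> complex" where
  "mtrace A = (\<Sum>i<dim_row A. A $$ (i,i))"

definition density_op :: "nat \<Rightarrow> complex mat \<Rightarrow> bool" where
  "density_op n \<rho> \<longleftrightarrow> \<rho> \<in> carrier_mat (2^n) (2^n)
     \<and> (\<forall>i<2^n. \<forall>j<2^n. \<rho> $$ (j,i) = cnj (\<rho> $$ (i,j)))
     \<and> (\<forall>v\<in>carrier_vec (2^n). 0 \<le> Re (\<Sum>i<2^n. cnj (v $ i) * (\<rho> *\<^sub>v v) $ i))
     \<and> mtrace \<rho> = 1"

definition pauli_group :: "nat \<Rightarrow> complex mat set" where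
  "pauli_group n = {c \<cdot>\<^sub>m kron_list Ps | c Ps. c \<in> {1, -1, \<i>, -\<i>} \<and> length Ps = n
       \<and> set Ps \<subseteq> {1\<^sub>m 2, pauliX, pauliY, pauliZ}}"

definition outer :: "nat \<Rightarrow> complex vec \<Rightarrow> complex mat" where
  "outer d \<psi> = mat d d (\<lambda>(i,j). \<psi> $ i * cnj (\<psi> $ j))"

definition stab_state :: "nat \<Rightarrow> complex mat \<Rightarrow> bool" where
  "stab_state n \<sigma> \<longleftrightarrow> (\<exists>S \<psi>.
      S \<subseteq> pauli_group n \<and> 1\<^sub>m (2^n) \<in> S
    \<and> (\<forall>A\<in>S. \<forall>B\<in>S. A * B \<in> S \<and> A * B = B * A)
    \<and> finite S \<and> card S = 2^n \<and> - (1\<^sub>m (2^n)) \<notin> S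
    \<and> \<psi> \<in> carrier_vec (2^n) \<and> (\<Sum>i<2^n. (cmod (\<psi> $ i))\<^sup>2) = 1
    \<and> (\<forall>A\<in>S. A *\<^sub>v \<psi> = \<psi>)
    \<and> (\<forall>\<phi>\<in>carrier_vec (2^n). (\<forall>A\<in>S. A *\<^sub>v \<phi> = \<phi>) \<longrightarrow> (\<exists>c. \<phi> = c \<cdot>\<^sub>v \<psi>))
    \<and> \<sigma> = outer (2^n) \<psi>)"

definition sg :: "bool \<Rightarrow> complex" where
  "sg b = (if b then -1 else 1)"

text \<open>Phase point (q,p) in F_2^2, with True representing 1.\<close>
definition phase_point :: "bool \<times> bool \<Rightarrow> complex mat" where
  "phase_point qp = (case qp of (q,p) \<Rightarrow>
     (1/2) \<cdot>\<^sub>m (1\<^sub>m 2 + sg p \<cdot>\<^sub>m pauliX + (sg q * sg p) \<cdot>\<^sub>m pauliY + sg q \<cdot>\<^sub>m pauliZ))"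

definition phase_op :: "(bool \<times> bool) list \<Rightarrow> complex mat" where
  "phase_op \<alpha> = kron_list (map phase_point \<alpha>)"

definition phase_space :: "nat \<Rightarrow> (bool \<times> bool) list set" where
  "phase_space n = {\<alpha>. length \<alpha> = n}"

definition wigner :: "nat \<Rightarrow> complex mat \<Rightarrow> (bool \<times> bool) list \<Rightarrow> real" where
  "wigner n \<rho> \<alpha> = Re (mtrace (\<rho> * phase_op \<alpha>)) / 2^n"

definition l1_dist :: "nat \<Rightarrow> ((bool \<times> bool) list \<Rightarrow> real) \<Rightarrow> ((bool \<times> bool) list \<Rightarrow> real) \<Rightarrow> real" where
  "l1_dist n f g = (\<Sum>\<alpha>\<in>phase_space n. \<bar>f \<alpha> - g \<alpha>\<bar>)"

definition W_free :: "nat \<Rightarrow> ((bool \<times> bool) list \<Rightarrow> real) set" where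
  "W_free n = {f. \<exists>k (c :: nat \<Rightarrow> real) \<sigma>. (\<forall>i<k. 0 \<le> c i \<and> stab_state n (\<sigma> i))
       \<and> (\<Sum>i<k. c i) = 1 \<and> f = (\<lambda>\<alpha>. \<Sum>i<k. c i * wigner n (\<sigma> i) \<alpha>)}"

definition wigner_distance :: "nat \<Rightarrow> complex mat \<Rightarrow> real" where
  "wigner_distance n \<rho> = Inf {l1_dist n (wigner n \<rho>) f | f. f \<in> W_free n}"

definition stab_extent :: "nat \<Rightarrow> complex mat \<Rightarrow> real" where
  "stab_extent n \<rho> = Inf {(\<Sum>i<k. \<bar>a i\<bar>) | k (a :: nat \<Rightarrow> real) \<sigma>.
       (\<forall>i<k. stab_state n (\<sigma> i))
     \<and> (\<forall>r<2^n. \<forall>s<2^n. \<rho> $$ (r,s) = (\<Sum>i<k. complex_of_real (a i) * \<sigma> i $$ (r,s)))}"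

definition M_max :: "nat \<Rightarrow> real" where
  "M_max n = Sup {l1_dist n (wigner n \<sigma>) (\<lambda>_. 0) | \<sigma>. stab_state n \<sigma>}"

end

theory Submission
  imports Defs
begin


lemma sum_2d: "(\<Sum>j<2*(d::nat). f j) = (\<Sum>j<d. f j) + (\<Sum>j<d. f (d+j))"
proof -
  have "sum f {0..<2*d} = sum f {0..<d} + sum f {d..<2*d}"
    by (rule sum.atLeastLessThan_concat[symmetric]) auto
  moreover have "sum f {d..<2*d} = sum (\<lambda>j. f (j + d)) {0..<d}"
    using sum.shift_bounds_nat_ivl[of f 0 d d] by (simp add: mult_2)
  ultimately show ?thesis by (simp add: atLeast0LessThan add.commute)
qed

lemma sum_2: "(\<Sum>j<2. f j) = f 0 + f (1::nat)"
  by (simp add: numeral_2_eq_2)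

lemma kron_dims[simp]: "dim_row (kron A B) = dim_row A * dim_row B"
  "dim_col (kron A B) = dim_col A * dim_col B"
  by (auto simp: kron_def)

lemma kron_carrier: "A \<in> carrier_mat 2 2 \<Longrightarrow> B \<in> carrier_mat d d \<Longrightarrow> kron A B \<in> carrier_mat (2*d) (2*d)"
  unfolding carrier_mat_def by simp

lemma kron_idx: "A \<in> carrier_mat 2 2 \<Longrightarrow> B \<in> carrier_mat d d \<Longrightarrow> r < 2*d \<Longrightarrow> s < 2*d \<Longrightarrow>
   kron A B $$ (r,s) = A $$ (r div d, s div d) * B $$ (r mod d, s mod d)"
  by (auto simp: kron_def)

lemma kron_idx_blk: "A \<in> carrier_mat 2 2 \<Longrightarrow> B \<in> carrier_mat d d \<Longrightarrow> a < 2 \<Longrightarrow> b < 2 \<Longrightarrow> i < d \<Longrightarrow> j < d \<Longrightarrow>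
   kron A B $$ (a*d+i, b*d+j) = A $$ (a, b) * B $$ (i, j)"
proof -
  assume as: "A \<in> carrier_mat 2 2" "B \<in> carrier_mat d d" "a < 2" "b < 2" "i < d" "j < d"
  have "(a+1)*d \<le> 2*d" "(b+1)*d \<le> 2*d" using as by (intro mult_le_mono1; simp)+
  moreover have "(a+1)*d = a*d+d" "(b+1)*d = b*d+d" by simp_all
  ultimately have "a*d+i < 2*d" "b*d+j < 2*d" using as by linarith+
  then show ?thesis using as kron_idx[OF as(1,2)] by simp
qed

lemma kron_list_carrier: "set Ps \<subseteq> carrier_mat 2 2 \<Longrightarrow> kron_list Ps \<in> carrier_mat (2^length Ps) (2^length Ps)"
proof (induction Ps)
  case Nil
  then show ?case by simp
next
  case (Cons P Ps)
  then have "P \<in> carrier_mat 2 2" "kron_list Ps \<in> carrier_mat (2^length Ps) (2^length Ps)" by simp_all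
  then show ?case using kron_carrier by simp
qed

lemma pauli_carrier: "pauliX \<in> carrier_mat 2 2" "pauliY \<in> carrier_mat 2 2" "pauliZ \<in> carrier_mat 2 2"
  by (auto simp: pauliX_def pauliY_def pauliZ_def)

lemma pauli_group_carrier: "A \<in> pauli_group n \<Longrightarrow> A \<in> carrier_mat (2^n) (2^n)"
proof -
  assume "A \<in> pauli_group n"
  then obtain c Ps where A: "A = c \<cdot>\<^sub>m kron_list Ps" and l: "length Ps = n" and P: "set Ps \<subseteq> {1\<^sub>m 2, pauliX, pauliY, pauliZ}"
    unfolding pauli_group_def by blast
  have "{1\<^sub>m 2, pauliX, pauliY, pauliZ} \<subseteq> carrier_mat 2 2" using pauli_carrier by simp
  then have "set Ps \<subseteq> carrier_mat 2 2" using P by (rule order_trans[rotated])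
  then have "kron_list Ps \<in> carrier_mat (2^n) (2^n)" using kron_list_carrier l by blast
  then show ?thesis unfolding A by (rule smult_carrier_mat)
qed

lemma kron_mult_vec: 
  assumes A: "A \<in> carrier_mat 2 2" and B: "B \<in> carrier_mat d d" and v: "v \<in> carrier_vec (2*d)" and r: "r < 2*d"
  shows "(kron A B *\<^sub>v v) $ r = A $$ (r div d, 0) * (\<Sum>j<d. B $$ (r mod d, j) * v $ j)
      + A $$ (r div d, 1) * (\<Sum>j<d. B $$ (r mod d, j) * v $ (d+j))"
proof -
  have d: "d > 0" using r by auto
  have "(kron A B *\<^sub>v v) $ r = (\<Sum>t<2*d. kron A B $$ (r,t) * v $ t)"
    using A B v r by (simp add: mult_mat_vec_def scalar_prod_def atLeast0LessThan row_def)
  also have "\<dots> = (\<Sum>t<d. kron A B $$ (r,t) * v $ t) + (\<Sum>t<d. kron A B $$ (r,d+t) * v $ (d+t))"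
    by (rule sum_2d)
  also have "(\<Sum>t<d. kron A B $$ (r,t) * v $ t) = A $$ (r div d, 0) * (\<Sum>j<d. B $$ (r mod d, j) * v $ j)"
    by (simp add: sum_distrib_left kron_idx[OF A B] r mult.assoc)
  also have "(\<Sum>t<d. kron A B $$ (r,d+t) * v $ (d+t)) = A $$ (r div d, 1) * (\<Sum>j<d. B $$ (r mod d, j) * v $ (d+j))"
    using d by (simp add: sum_distrib_left kron_idx[OF A B] r mult.assoc)
  finally show ?thesis .
qed



lemma mult_idx: "A \<in> carrier_mat n m \<Longrightarrow> B \<in> carrier_mat m p \<Longrightarrow> i < n \<Longrightarrow> j < p \<Longrightarrow>
  (A * B) $$ (i,j) = (\<Sum>t<m. A $$ (i,t) * B $$ (t,j))"
  by (simp add: scalar_prod_def atLeast0LessThan)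

lemma mult_vec_idx: "A \<in> carrier_mat n m \<Longrightarrow> v \<in> carrier_vec m \<Longrightarrow> i < n \<Longrightarrow>
  (A *\<^sub>v v) $ i = (\<Sum>t<m. A $$ (i,t) * v $ t)"
  by (simp add: scalar_prod_def atLeast0LessThan)

lemma kron_idx_col:
  assumes A: "A \<in> carrier_mat 2 2" and B: "B \<in> carrier_mat d d" and r: "r < 2*d" and t: "t < d"
  shows "kron A B $$ (r,t) = A $$ (r div d, 0) * B $$ (r mod d, t)"
    "kron A B $$ (r,d+t) = A $$ (r div d, 1) * B $$ (r mod d, t)"
    "kron A B $$ (t,r) = A $$ (0, r div d) * B $$ (t, r mod d)"
    "kron A B $$ (d+t,r) = A $$ (1, r div d) * B $$ (t, r mod d)"
  using t kron_idx[OF A B r, of t] kron_idx[OF A B r, of "d+t"] kron_idx[OF A B _ r, of t] kron_idx[OF A B _ r, of "d+t"]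
  by auto

lemma kron_mult:
  assumes A: "A \<in> carrier_mat 2 2" and C: "C \<in> carrier_mat 2 2" and B: "B \<in> carrier_mat d d" and D: "D \<in> carrier_mat d d"
  shows "kron A B * kron C D = kron (A*C) (B*D)"
proof (rule eq_matI)
  have AC: "A * C \<in> carrier_mat 2 2" and BD: "B * D \<in> carrier_mat d d" using A B C D by auto
  fix r s assume r: "r < dim_row (kron (A*C) (B*D))" and s: "s < dim_col (kron (A*C) (B*D))"
  then have r': "r < 2*d" and s': "s < 2*d" using A B C D by auto
  have d: "d > 0" using r' by auto
  have "(kron A B * kron C D) $$ (r,s) = (\<Sum>t<2*d. kron A B $$ (r,t) * kron C D $$ (t,s))"
    using kron_carrier[OF A B] kron_carrier[OF C D] r' s' by (rule mult_idx)
  also have "\<dots> = (\<Sum>t<d. kron A B $$ (r,t) * kron C D $$ (t,s)) + (\<Sum>t<d. kron A B $$ (r,d+t) * kron C D $$ (d+t,s))"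
    by (rule sum_2d)
  also have "(\<Sum>t<d. kron A B $$ (r,t) * kron C D $$ (t,s)) = (\<Sum>t<d. A $$ (r div d, 0) * C $$ (0, s div d) * (B $$ (r mod d, t) * D $$ (t, s mod d)))"
    by (rule sum.cong[OF refl]) (simp add: kron_idx_col[OF A B r'] kron_idx_col[OF C D s'])
  also have "\<dots> = A $$ (r div d, 0) * C $$ (0, s div d) * (\<Sum>t<d. B $$ (r mod d, t) * D $$ (t, s mod d))"
    by (simp add: sum_distrib_left)
  also have "(\<Sum>t<d. kron A B $$ (r,d+t) * kron C D $$ (d+t,s)) = (\<Sum>t<d. A $$ (r div d, 1) * C $$ (1, s div d) * (B $$ (r mod d, t) * D $$ (t, s mod d)))"
    by (rule sum.cong[OF refl]) (simp add: kron_idx_col[OF A B r'] kron_idx_col[OF C D s'])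
  also have "\<dots> = A $$ (r div d, 1) * C $$ (1, s div d) * (\<Sum>t<d. B $$ (r mod d, t) * D $$ (t, s mod d))"
    by (simp add: sum_distrib_left)
  also have "A $$ (r div d, 0) * C $$ (0, s div d) * (\<Sum>t<d. B $$ (r mod d, t) * D $$ (t, s mod d)) + 
      A $$ (r div d, 1) * C $$ (1, s div d) * (\<Sum>t<d. B $$ (r mod d, t) * D $$ (t, s mod d))
     = (A * C) $$ (r div d, s div d) * (B * D) $$ (r mod d, s mod d)"
  proof -
    have "r div d < 2" "s div d < 2" using r' s' by (simp_all add: less_mult_imp_div_less mult.commute)
    moreover have "r mod d < d" "s mod d < d" using d by simp_all
    ultimately show ?thesis
      by (simp add: mult_idx[OF A C] mult_idx[OF B D] sum_2 algebra_simps)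
  qed
  also have "\<dots> = kron (A*C) (B*D) $$ (r,s)" using kron_idx[OF AC BD r' s'] by simp
  finally show "(kron A B * kron C D) $$ (r,s) = kron (A*C) (B*D) $$ (r,s)" .
next
  show "dim_row (kron A B * kron C D) = dim_row (kron (A*C) (B*D))" using A B C D by simp
  show "dim_col (kron A B * kron C D) = dim_col (kron (A*C) (B*D))" using A B C D by simp
qed

lemma kron_smult_right: "kron A (c \<cdot>\<^sub>m K) = c \<cdot>\<^sub>m kron A K"
proof (rule eq_matI)
  fix i j assume i: "i < dim_row (c \<cdot>\<^sub>m kron A K)" and j: "j < dim_col (c \<cdot>\<^sub>m kron A K)"
  then have "dim_row K > 0" "dim_col K > 0" by (auto intro: gr0I)
  then have "i mod dim_row K < dim_row K" "j mod dim_col K < dim_col K" by simp_all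
  then show "kron A (c \<cdot>\<^sub>m K) $$ (i, j) = (c \<cdot>\<^sub>m kron A K) $$ (i, j)"
    using i j by (simp add: kron_def)
qed (simp_all add: kron_def)

lemma kron_smult_left: "kron (c \<cdot>\<^sub>m A) K = c \<cdot>\<^sub>m kron A K"
proof (rule eq_matI)
  fix i j assume i: "i < dim_row (c \<cdot>\<^sub>m kron A K)" and j: "j < dim_col (c \<cdot>\<^sub>m kron A K)"
  then have "dim_row K > 0" "dim_col K > 0" by (auto intro: gr0I)
  then have "i div dim_row K < dim_row A" "j div dim_col K < dim_col A" using i j
    by (simp_all add: less_mult_imp_div_less)
  then show "kron (c \<cdot>\<^sub>m A) K $$ (i, j) = (c \<cdot>\<^sub>m kron A K) $$ (i, j)"
    using i j by (simp add: kron_def)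
qed (simp_all add: kron_def)

lemma kron_one: "kron (1\<^sub>m 2) (1\<^sub>m d) = 1\<^sub>m (2*d)"
proof (rule eq_matI)
  fix r s assume "r < dim_row (1\<^sub>m (2*d))" "s < dim_col (1\<^sub>m (2*d)::complex mat)"
  then have r: "r < 2*d" and s: "s < 2*d" by auto
  have d: "d > 0" using r by auto
  have "r div d < 2" "s div d < 2" using r s by (simp_all add: less_mult_imp_div_less mult.commute)
  moreover have "r mod d < d" "s mod d < d" using d by simp_all
  moreover have "(r div d = s div d \<and> r mod d = s mod d) = (r = s)"
    by (metis div_mult_mod_eq)
  ultimately show "kron (1\<^sub>m 2) (1\<^sub>m d) $$ (r,s) = 1\<^sub>m (2*d) $$ (r,s)"
    using kron_idx[of "1\<^sub>m 2" "1\<^sub>m d" d r s] r s by auto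
qed auto

definition kvec :: "nat \<Rightarrow> complex vec \<Rightarrow> complex vec \<Rightarrow> complex vec" where
  "kvec d u v = vec (2*d) (\<lambda>i. u $ (i div d) * v $ (i mod d))"

lemma kvec_carrier: "kvec d u v \<in> carrier_vec (2*d)" by (simp add: kvec_def)

lemma kron_mult_kvec:
  assumes A: "A \<in> carrier_mat 2 2" and B: "B \<in> carrier_mat d d" and u: "u \<in> carrier_vec 2" and v: "v \<in> carrier_vec d"
  shows "kron A B *\<^sub>v kvec d u v = kvec d (A *\<^sub>v u) (B *\<^sub>v v)"
proof (rule eq_vecI)
  fix r assume "r < dim_vec (kvec d (A *\<^sub>v u) (B *\<^sub>v v))"
  then have r: "r < 2*d" by (simp add: kvec_def)
  have d: "d > 0" using r by auto
  have rd: "r div d < 2" using r by (simp_all add: less_mult_imp_div_less mult.commute)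
  have rm: "r mod d < d" using d by simp
  have "(kron A B *\<^sub>v kvec d u v) $ r = A $$ (r div d, 0) * (\<Sum>j<d. B $$ (r mod d, j) * kvec d u v $ j)
      + A $$ (r div d, 1) * (\<Sum>j<d. B $$ (r mod d, j) * kvec d u v $ (d+j))"
    by (rule kron_mult_vec[OF A B kvec_carrier r])
  also have "(\<Sum>j<d. B $$ (r mod d, j) * kvec d u v $ j) = u $ 0 * (B *\<^sub>v v) $ (r mod d)"
    using d rm by (simp add: kvec_def mult_vec_idx[OF B v] sum_distrib_left algebra_simps)
  also have "(\<Sum>j<d. B $$ (r mod d, j) * kvec d u v $ (d+j)) = u $ 1 * (B *\<^sub>v v) $ (r mod d)"
    using d rm by (simp add: kvec_def mult_vec_idx[OF B v] sum_distrib_left algebra_simps)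
  also have "A $$ (r div d, 0) * (u $ 0 * (B *\<^sub>v v) $ (r mod d)) + A $$ (r div d, 1) * (u $ 1 * (B *\<^sub>v v) $ (r mod d))
     = (A *\<^sub>v u) $ (r div d) * (B *\<^sub>v v) $ (r mod d)"
    by (simp add: mult_vec_idx[OF A u rd] sum_2 algebra_simps)
  finally show "(kron A B *\<^sub>v kvec d u v) $ r = kvec d (A *\<^sub>v u) (B *\<^sub>v v) $ r"
    using r by (simp add: kvec_def)
qed (use A B in \<open>simp add: kvec_def\<close>)


section \<open>Single-qubit stabilizer data\<close>

definition hh :: complex where "hh = complex_of_real (sqrt (1/2))"

lemma hh_sq: "hh * hh = 1/2"
proof -
  have "hh * hh = complex_of_real (sqrt (1/2) * sqrt (1/2))" unfolding hh_def of_real_mult ..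
  also have "sqrt (1/2) * sqrt (1/2) = (1/2::real)" by simp
  finally show ?thesis by simp
qed

lemma cnj_hh[simp]: "cnj hh = hh" by (simp add: hh_def)

lemma cmod_hh_sq: "(cmod hh)\<^sup>2 = 1/2"
  by (simp add: hh_def)

definition Pb :: "nat \<Rightarrow> complex mat" where
  "Pb k = (if k = 2 then pauliX else if k = 3 then pauliY else pauliZ)"

definition sgk :: "nat \<Rightarrow> complex" where
  "sgk k = (if k = 1 then -1 else 1)"

definition Pk :: "nat \<Rightarrow> complex mat" where
  "Pk k = sgk k \<cdot>\<^sub>m Pb k"

definition psi1 :: "nat \<Rightarrow> complex vec" where
  "psi1 k = (if k = 0 then vec 2 (\<lambda>i. if i = 0 then 1 else 0)
     else if k = 1 then vec 2 (\<lambda>i. if i = 0 then 0 else 1)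
     else if k = 2 then vec 2 (\<lambda>i. hh)
     else vec 2 (\<lambda>i. if i = 0 then hh else \<i> * hh))"

lemma Pk_carrier: "Pk k \<in> carrier_mat 2 2"
  by (simp add: Pk_def Pb_def pauliX_def pauliY_def pauliZ_def)

lemma Pb_in: "k < 4 \<Longrightarrow> Pb k \<in> {1\<^sub>m 2, pauliX, pauliY, pauliZ}"
  by (simp add: Pb_def)

lemma sgk_in: "sgk k = 1 \<or> sgk k = -1"
  by (simp add: sgk_def)

lemma Pk_entries: "k < 4 \<Longrightarrow>
  Pk k $$ (0,0) = (if k = 0 then 1 else if k = 1 then -1 else 0) \<and>
  Pk k $$ (1,1) = (if k = 0 then -1 else if k = 1 then 1 else 0) \<and>
  Pk k $$ (0,1) = (if k = 2 then 1 else if k = 3 then -\<i> else 0) \<and>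
  Pk k $$ (1,0) = (if k = 2 then 1 else if k = 3 then \<i> else 0)"
  by (auto simp: Pk_def Pb_def sgk_def pauliX_def pauliY_def pauliZ_def)

lemma k4_cases: "k < (4::nat) \<Longrightarrow> k = 0 \<or> k = 1 \<or> k = 2 \<or> k = 3" by auto

lemma mat2_eqI: "A \<in> carrier_mat 2 2 \<Longrightarrow> B \<in> carrier_mat 2 2 \<Longrightarrow>
  A $$ (0,0) = B $$ (0,0) \<Longrightarrow> A $$ (0,1) = B $$ (0,1) \<Longrightarrow> A $$ (1,0) = B $$ (1,0) \<Longrightarrow> A $$ (1,1) = B $$ (1,1) \<Longrightarrow> A = B"
proof (rule eq_matI)
  fix i j assume as: "A \<in> carrier_mat 2 2" "B \<in> carrier_mat 2 2" 
    "A $$ (0,0) = B $$ (0,0)" "A $$ (0,1) = B $$ (0,1)" "A $$ (1,0) = B $$ (1,0)" "A $$ (1,1) = B $$ (1,1)"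
    "i < dim_row B" "j < dim_col B"
  then have "i < 2" "j < 2" by auto
  then have "i = 0 \<or> i = 1" "j = 0 \<or> j = 1" by auto
  then show "A $$ (i,j) = B $$ (i,j)" using as by auto
qed auto

lemma Pk_sq: "k < 4 \<Longrightarrow> Pk k * Pk k = 1\<^sub>m 2"
proof -
  assume k: "k < 4"
  have C: "Pk k \<in> carrier_mat 2 2" by (rule Pk_carrier)
  have e: "\<And>i j. i < 2 \<Longrightarrow> j < 2 \<Longrightarrow> (Pk k * Pk k) $$ (i,j) = Pk k $$ (i,0) * Pk k $$ (0,j) + Pk k $$ (i,1) * Pk k $$ (1,j)"
    using mult_idx[OF C C] by (simp add: sum_2)
  have e00: "(Pk k * Pk k) $$ (0,0) = Pk k $$ (0,0) * Pk k $$ (0,0) + Pk k $$ (0,1) * Pk k $$ (1,0)" by (rule e) auto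
  have e01: "(Pk k * Pk k) $$ (0,1) = Pk k $$ (0,0) * Pk k $$ (0,1) + Pk k $$ (0,1) * Pk k $$ (1,1)" by (rule e) auto
  have e10: "(Pk k * Pk k) $$ (1,0) = Pk k $$ (1,0) * Pk k $$ (0,0) + Pk k $$ (1,1) * Pk k $$ (1,0)" by (rule e) auto
  have e11: "(Pk k * Pk k) $$ (1,1) = Pk k $$ (1,0) * Pk k $$ (0,1) + Pk k $$ (1,1) * Pk k $$ (1,1)" by (rule e) auto
  show ?thesis
    apply (rule mat2_eqI)
    using C apply simp
       apply simp
    unfolding e00 e01 e10 e11
    using Pk_entries[OF k] k4_cases[OF k] by auto
qed

lemma psi1_carrier: "psi1 k \<in> carrier_vec 2"
  by (simp add: psi1_def)

lemma psi1_entries: "k < 4 \<Longrightarrow>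
   psi1 k $ 0 = (if k = 0 then 1 else if k = 1 then 0 else hh) \<and>
   psi1 k $ 1 = (if k = 0 then 0 else if k = 1 then 1 else if k = 2 then hh else \<i> * hh)"
  by (auto simp: psi1_def)

lemma mult_vec2: "A \<in> carrier_mat 2 2 \<Longrightarrow> v \<in> carrier_vec 2 \<Longrightarrow>
   (A *\<^sub>v v) $ 0 = A $$ (0,0) * v $ 0 + A $$ (0,1) * v $ 1 \<and> (A *\<^sub>v v) $ 1 = A $$ (1,0) * v $ 0 + A $$ (1,1) * v $ 1"
  using mult_vec_idx[of A 2 2 v 0] mult_vec_idx[of A 2 2 v 1] by (simp add: sum_2)

lemma vec2_eqI: "u \<in> carrier_vec 2 \<Longrightarrow> v \<in> carrier_vec 2 \<Longrightarrow> u $ 0 = v $ 0 \<Longrightarrow> u $ 1 = v $ 1 \<Longrightarrow> u = v"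
proof (rule eq_vecI)
  fix i assume as: "u \<in> carrier_vec 2" "v \<in> carrier_vec 2" "u $ 0 = v $ 0" "u $ 1 = v $ 1" "i < dim_vec v"
  then have "i = 0 \<or> i = 1" by auto
  then show "u $ i = v $ i" using as by auto
qed auto

lemma Pk_fix: "k < 4 \<Longrightarrow> Pk k *\<^sub>v psi1 k = psi1 k"
proof -
  assume k: "k < 4"
  show ?thesis
    apply (rule vec2_eqI)
    using Pk_carrier[of k] psi1_carrier[of k] apply simp
    using psi1_carrier[of k] apply simp
    using mult_vec2[OF Pk_carrier psi1_carrier, of k k] Pk_entries[OF k] psi1_entries[OF k] k4_cases[OF k] Pk_carrier[of k]
    by (auto simp: algebra_simps)
qed

lemma psi1_norm: "k < 4 \<Longrightarrow> (\<Sum>i<2. (cmod (psi1 k $ i))\<^sup>2) = 1"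
proof -
  assume k: "k < 4"
  have "cmod (\<i> * hh) = cmod hh" by (simp add: norm_mult)
  then show ?thesis using psi1_entries[OF k] k4_cases[OF k] cmod_hh_sq by (auto simp: sum_2)
qed

lemma Pk_unique: "k < 4 \<Longrightarrow> Pk k $$ (0,0) * c0 + Pk k $$ (0,1) * c1 = c0 \<Longrightarrow> Pk k $$ (1,0) * c0 + Pk k $$ (1,1) * c1 = c1 \<Longrightarrow>
   \<exists>t. c0 = t * psi1 k $ 0 \<and> c1 = t * psi1 k $ 1"
proof -
  assume k: "k < 4" and e0: "Pk k $$ (0,0) * c0 + Pk k $$ (0,1) * c1 = c0" and e1: "Pk k $$ (1,0) * c0 + Pk k $$ (1,1) * c1 = c1"
  have hh2: "hh * (2 * hh) = 1" using hh_sq by (simp add: algebra_simps)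
  consider "k = 0" | "k = 1" | "k = 2" | "k = 3" using k by linarith
  then show ?thesis
  proof cases
    case 1
    then have "c1 = 0" using e1 Pk_entries[OF k] by simp
    then show ?thesis using 1 psi1_entries[OF k] by (intro exI[of _ c0]) simp
  next
    case 2
    then have "c0 = 0" using e0 Pk_entries[OF k] by simp
    then show ?thesis using 2 psi1_entries[OF k] by (intro exI[of _ c1]) simp
  next
    case 3
    then have "c1 = c0" using e0 Pk_entries[OF k] by simp
    then show ?thesis using 3 psi1_entries[OF k] hh2 by (intro exI[of _ "2 * hh * c0"]) (simp add: algebra_simps)
  next
    case 4
    then have "c1 = \<i> * c0" using e1 Pk_entries[OF k] by simp
    then show ?thesis using 4 psi1_entries[OF k] hh2 by (intro exI[of _ "2 * hh * c0"]) (simp add: algebra_simps)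
  qed
qed

lemma Pk_not_negI: "k < 4 \<Longrightarrow> Pk k $$ (0,0) * x = -1 \<Longrightarrow> Pk k $$ (1,1) * x = -1 \<Longrightarrow> False"
  using Pk_entries[of k] k4_cases[of k] by auto

lemma Pk_disj: "k < 4 \<Longrightarrow> (\<forall>a<2. \<forall>b<2. (1\<^sub>m 2 :: complex mat) $$ (a,b) * x = Pk k $$ (a,b) * y) \<Longrightarrow> x = 0"
proof -
  assume k: "k < 4" and h: "\<forall>a<2. \<forall>b<2. (1\<^sub>m 2 :: complex mat) $$ (a,b) * x = Pk k $$ (a,b) * y"
  have "x = Pk k $$ (0,0) * y" "x = Pk k $$ (1,1) * y" using h[rule_format, of 0 0] h[rule_format, of 1 1] by auto
  then show ?thesis using Pk_entries[OF k] k4_cases[OF k] by auto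
qed

lemma Pk_nz: "k < 4 \<Longrightarrow> \<exists>a<2. \<exists>b<2. Pk k $$ (a,b) \<noteq> 0"
proof -
  assume k: "k < 4"
  have "Pk k $$ (0,0) \<noteq> 0 \<or> Pk k $$ (0,1) \<noteq> 0" using Pk_entries[OF k] k4_cases[OF k] by auto
  then show ?thesis by (metis one_less_numeral_iff semiring_norm(76) zero_less_numeral)
qed

lemma Pk_ne_one: "k < 4 \<Longrightarrow> Pk k \<noteq> 1\<^sub>m 2"
proof
  assume k: "k < 4" and e: "Pk k = 1\<^sub>m 2"
  have "(1\<^sub>m 2 :: complex mat) $$ (0,0) = 1" "(1\<^sub>m 2 :: complex mat) $$ (1,1) = 1" by auto
  then show False using e Pk_entries[OF k] k4_cases[OF k] by auto
qed


section \<open>Tensoring a stabilizer state with a single-qubit stabilizer state\<close>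

lemma kron_inj:
  assumes A: "A \<in> carrier_mat 2 2" and B: "B \<in> carrier_mat d d" and D: "D \<in> carrier_mat d d"
    and ab: "a < 2" "b < 2" "A $$ (a,b) \<noteq> 0" and e: "kron A B = kron A D"
  shows "B = D"
proof (rule eq_matI)
  fix i j assume "i < dim_row D" "j < dim_col D"
  then have i: "i < d" and j: "j < d" using D by auto
  have "kron A B $$ (a*d+i, b*d+j) = kron A D $$ (a*d+i, b*d+j)" using e by simp
  then have "A $$ (a,b) * B $$ (i,j) = A $$ (a,b) * D $$ (i,j)"
    unfolding kron_idx_blk[OF A B ab(1,2) i j] kron_idx_blk[OF A D ab(1,2) i j] .
  then show "B $$ (i,j) = D $$ (i,j)" using ab(3) by simp
qed (use B D in auto)

lemma kron_disj:
  assumes k: "k < 4" and B: "B \<in> carrier_mat d d" and D: "D \<in> carrier_mat d d"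
    and e: "kron (1\<^sub>m 2) B = kron (Pk k) D" and i: "i < d" and j: "j < d"
  shows "B $$ (i,j) = 0"
proof (rule Pk_disj[OF k, of _ "D $$ (i,j)"], intro allI impI)
  fix a b :: nat assume a: "a < 2" and b: "b < 2"
  show "(1\<^sub>m 2 :: complex mat) $$ (a,b) * B $$ (i,j) = Pk k $$ (a,b) * D $$ (i,j)"
    using kron_idx_blk[OF _ B a b i j, of "1\<^sub>m 2"] kron_idx_blk[OF Pk_carrier D a b i j, of k] e by simp
qed

lemma kron_Pk_negI:
  assumes k: "k < 4" and D: "D \<in> carrier_mat d d" and d: "d > 0"
  shows "kron (Pk k) D \<noteq> - (1\<^sub>m (2*d))"
proof
  assume e: "kron (Pk k) D = - (1\<^sub>m (2*d))"
  have a: "kron (Pk k) D $$ (0*d+0, 0*d+0) = Pk k $$ (0,0) * D $$ (0,0)"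
    by (rule kron_idx_blk[OF Pk_carrier D]) (use d in auto)
  have b: "kron (Pk k) D $$ (1*d+0, 1*d+0) = Pk k $$ (1,1) * D $$ (0,0)"
    by (rule kron_idx_blk[OF Pk_carrier D]) (use d in auto)
  have h0: "kron (Pk k) D $$ (0,0) = -1" using e d by simp
  have h1: "kron (Pk k) D $$ (d,d) = -1" using e d by simp
  have "Pk k $$ (0,0) * D $$ (0,0) = -1" using a h0 by simp
  moreover have "Pk k $$ (1,1) * D $$ (0,0) = -1" using b h1 by simp
  ultimately show False using Pk_not_negI[OF k] by blast
qed

lemma kron_one_negI:
  assumes B: "B \<in> carrier_mat d d" and e: "kron (1\<^sub>m 2) B = - (1\<^sub>m (2*d))"
  shows "B = - (1\<^sub>m d)"
proof (rule eq_matI)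
  fix i j assume "i < dim_row (- (1\<^sub>m d) :: complex mat)" "j < dim_col (- (1\<^sub>m d) :: complex mat)"
  then have i: "i < d" and j: "j < d" by auto
  have "kron (1\<^sub>m 2) B $$ (0*d+i, 0*d+j) = (1\<^sub>m 2 :: complex mat) $$ (0,0) * B $$ (i,j)"
    by (rule kron_idx_blk[OF _ B]) (use i j in auto)
  moreover have "(- (1\<^sub>m (2*d)) :: complex mat) $$ (i,j) = (- (1\<^sub>m d) :: complex mat) $$ (i,j)"
    using i j by auto
  ultimately show "B $$ (i,j) = (- (1\<^sub>m d) :: complex mat) $$ (i,j)" using e by simp
qed (use B in auto)

lemma kvec_lo: "j < d \<Longrightarrow> kvec d u v $ j = u $ 0 * v $ j"
  by (simp add: kvec_def)

lemma kvec_hi: "j < d \<Longrightarrow> kvec d u v $ (d+j) = u $ 1 * v $ j"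
  by (simp add: kvec_def)

lemma kvec_norm:
  "(\<Sum>j<2*d. (cmod (kvec d u v $ j))\<^sup>2) = (\<Sum>a<2. (cmod (u $ a))\<^sup>2) * (\<Sum>j<d. (cmod (v $ j))\<^sup>2)"
proof -
  have "(\<Sum>j<2*d. (cmod (kvec d u v $ j))\<^sup>2) = (\<Sum>j<d. (cmod (kvec d u v $ j))\<^sup>2) + (\<Sum>j<d. (cmod (kvec d u v $ (d+j)))\<^sup>2)"
    by (rule sum_2d)
  also have "(\<Sum>j<d. (cmod (kvec d u v $ j))\<^sup>2) = (\<Sum>j<d. (cmod (u $ 0))\<^sup>2 * (cmod (v $ j))\<^sup>2)"
    by (rule sum.cong) (auto simp: kvec_lo norm_mult power_mult_distrib)
  also have "(\<Sum>j<d. (cmod (kvec d u v $ (d+j)))\<^sup>2) = (\<Sum>j<d. (cmod (u $ 1))\<^sup>2 * (cmod (v $ j))\<^sup>2)"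
    by (rule sum.cong) (auto simp: kvec_hi norm_mult power_mult_distrib)
  finally show ?thesis by (simp add: sum_2 sum_distrib_left algebra_simps)
qed

lemma outer_carrier: "outer d v \<in> carrier_mat d d" by (simp add: outer_def)

lemma outer_kron: "d > 0 \<Longrightarrow> kron (outer 2 u) (outer d v) = outer (2*d) (kvec d u v)"
proof (rule eq_matI)
  fix r s assume d: "d > 0" and "r < dim_row (outer (2*d) (kvec d u v))" "s < dim_col (outer (2*d) (kvec d u v))"
  then have r: "r < 2*d" and s: "s < 2*d" by (auto simp: outer_def)
  have "r div d < 2" "s div d < 2" using r s by (simp_all add: less_mult_imp_div_less mult.commute)
  moreover have "r mod d < d" "s mod d < d" using d by simp_all
  ultimately show "kron (outer 2 u) (outer d v) $$ (r,s) = outer (2*d) (kvec d u v) $$ (r,s)"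
    using kron_idx[OF outer_carrier outer_carrier r s] r s by (simp add: outer_def kvec_def)
qed (auto simp: outer_def)

lemma sum_one_mat: "i < d \<Longrightarrow> (\<Sum>j<d. (1\<^sub>m d :: complex mat) $$ (i,j) * f j) = f i"
proof -
  assume i: "i < d"
  have "(\<Sum>j<d. (1\<^sub>m d :: complex mat) $$ (i,j) * f j) = (\<Sum>j<d. if i = j then f j else 0)"
    by (rule sum.cong) (use i in auto)
  also have "\<dots> = f i" using i by simp
  finally show ?thesis .
qed

lemma nonzero_entry:
  assumes "(\<Sum>i<d. (cmod (\<psi> $ i))\<^sup>2) = 1"
  shows "\<exists>i0<d. \<psi> $ i0 \<noteq> 0"
proof (rule ccontr)
  assume "\<not> ?thesis"
  then have "(\<Sum>i<d. (cmod (\<psi> $ i))\<^sup>2) = 0" by simp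
  then show False using assms by simp
qed

lemma kron_uniq:
  assumes k: "k < 4" and Scar: "\<forall>B\<in>S. B \<in> carrier_mat d d" and Sone: "1\<^sub>m d \<in> S"
    and psiu: "\<forall>\<phi>\<in>carrier_vec d. (\<forall>A\<in>S. A *\<^sub>v \<phi> = \<phi>) \<longrightarrow> (\<exists>c. \<phi> = c \<cdot>\<^sub>v \<psi>)"
    and psic: "\<psi> \<in> carrier_vec d" and i0: "i0 < d" "\<psi> $ i0 \<noteq> 0"
    and phic: "\<phi> \<in> carrier_vec (2*d)"
    and fix1: "\<forall>B\<in>S. kron (1\<^sub>m 2) B *\<^sub>v \<phi> = \<phi>" and fixP: "kron (Pk k) (1\<^sub>m d) *\<^sub>v \<phi> = \<phi>"
  shows "\<exists>c. \<phi> = c \<cdot>\<^sub>v kvec d (psi1 k) \<psi>"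
proof -
  define \<phi>0 where "\<phi>0 = vec d (\<lambda>j. \<phi> $ j)"
  define \<phi>1 where "\<phi>1 = vec d (\<lambda>j. \<phi> $ (d+j))"
  have I2: "(1\<^sub>m 2 :: complex mat) \<in> carrier_mat 2 2" by simp
  have f0: "B *\<^sub>v \<phi>0 = \<phi>0" if B: "B \<in> S" for B
  proof (rule eq_vecI)
    fix i assume "i < dim_vec \<phi>0"
    then have i: "i < d" by (simp add: \<phi>0_def)
    have Bc: "B \<in> carrier_mat d d" using Scar B by auto
    have ir: "i < 2*d" using i by simp
    have "(kron (1\<^sub>m 2) B *\<^sub>v \<phi>) $ i = (\<Sum>j<d. B $$ (i, j) * \<phi> $ j)"
      using kron_mult_vec[OF I2 Bc phic ir] i by simp
    also have "\<dots> = (B *\<^sub>v \<phi>0) $ i"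
      using mult_vec_idx[OF Bc _ i, of \<phi>0] by (simp add: \<phi>0_def)
    finally show "(B *\<^sub>v \<phi>0) $ i = \<phi>0 $ i" using fix1 B i by (simp add: \<phi>0_def)
  qed (use Scar that in \<open>auto simp: \<phi>0_def\<close>)
  have f1: "B *\<^sub>v \<phi>1 = \<phi>1" if B: "B \<in> S" for B
  proof (rule eq_vecI)
    fix i assume "i < dim_vec \<phi>1"
    then have i: "i < d" by (simp add: \<phi>1_def)
    have Bc: "B \<in> carrier_mat d d" using Scar B by auto
    have ir: "d+i < 2*d" using i by simp
    have "(kron (1\<^sub>m 2) B *\<^sub>v \<phi>) $ (d+i) = (\<Sum>j<d. B $$ (i, j) * \<phi> $ (d+j))"
      using kron_mult_vec[OF I2 Bc phic ir] i by simp
    also have "\<dots> = (B *\<^sub>v \<phi>1) $ i"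
      using mult_vec_idx[OF Bc _ i, of \<phi>1] by (simp add: \<phi>1_def)
    finally show "(B *\<^sub>v \<phi>1) $ i = \<phi>1 $ i" using fix1 B i by (simp add: \<phi>1_def)
  qed (use Scar that in \<open>auto simp: \<phi>1_def\<close>)
  obtain c0 where c0: "\<phi>0 = c0 \<cdot>\<^sub>v \<psi>" using psiu f0 by (force simp: \<phi>0_def)
  obtain c1 where c1: "\<phi>1 = c1 \<cdot>\<^sub>v \<psi>" using psiu f1 by (force simp: \<phi>1_def)
  have v0: "\<phi> $ j = c0 * \<psi> $ j" if "j < d" for j
    using c0 that psic by (metis \<phi>0_def index_smult_vec(1) index_vec carrier_vecD)
  have v1: "\<phi> $ (d+j) = c1 * \<psi> $ j" if "j < d" for j
    using c1 that psic by (metis \<phi>1_def index_smult_vec(1) index_vec carrier_vecD)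
  have Ic: "(1\<^sub>m d :: complex mat) \<in> carrier_mat d d" by simp
  have P: "(kron (Pk k) (1\<^sub>m d) *\<^sub>v \<phi>) $ r = Pk k $$ (r div d, 0) * \<phi> $ (r mod d) + Pk k $$ (r div d, 1) * \<phi> $ (d + r mod d)"
    if r: "r < 2*d" for r
  proof -
    have "r mod d < d" using r by (cases "d = 0") auto
    then show ?thesis using kron_mult_vec[OF Pk_carrier Ic phic r] sum_one_mat by simp
  qed
  have e0: "Pk k $$ (0,0) * c0 + Pk k $$ (0,1) * c1 = c0"
  proof -
    have "Pk k $$ (0,0) * (c0 * \<psi> $ i0) + Pk k $$ (0,1) * (c1 * \<psi> $ i0) = c0 * \<psi> $ i0"
      using P[of i0] fixP i0 v0 v1 by simp
    then have "(Pk k $$ (0,0) * c0 + Pk k $$ (0,1) * c1) * \<psi> $ i0 = c0 * \<psi> $ i0" by (simp add: algebra_simps)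
    then show ?thesis using i0(2) by simp
  qed
  have e1: "Pk k $$ (1,0) * c0 + Pk k $$ (1,1) * c1 = c1"
  proof -
    have r: "d + i0 < 2*d" using i0 by simp
    have "(d + i0) div d = 1" "(d + i0) mod d = i0" using i0 by auto
    then have "Pk k $$ (1,0) * (c0 * \<psi> $ i0) + Pk k $$ (1,1) * (c1 * \<psi> $ i0) = c1 * \<psi> $ i0"
      using P[OF r] fixP i0 v0 v1 by simp
    then have "(Pk k $$ (1,0) * c0 + Pk k $$ (1,1) * c1) * \<psi> $ i0 = c1 * \<psi> $ i0" by (simp add: algebra_simps)
    then show ?thesis using i0(2) by simp
  qed
  obtain t where t: "c0 = t * psi1 k $ 0" "c1 = t * psi1 k $ 1" using Pk_unique[OF k e0 e1] by blast
  have "\<phi> = t \<cdot>\<^sub>v kvec d (psi1 k) \<psi>"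
  proof (rule eq_vecI)
    fix r assume "r < dim_vec (t \<cdot>\<^sub>v kvec d (psi1 k) \<psi>)"
    then have r: "r < 2*d" by (simp add: kvec_def)
    show "\<phi> $ r = (t \<cdot>\<^sub>v kvec d (psi1 k) \<psi>) $ r"
    proof (cases "r < d")
      case True
      then show ?thesis using v0[OF True] t r by (simp add: kvec_def)
    next
      case False
      then obtain j where j: "r = d + j" "j < d" using r by (metis add_diff_inverse_nat add_less_imp_less_left mult_2)
      then show ?thesis using v1[OF j(2)] t r by (simp add: kvec_def)
    qed
  qed (use phic in \<open>simp add: kvec_def\<close>)
  then show ?thesis by blast
qed


lemma smult_smult_m: "a \<cdot>\<^sub>m (b \<cdot>\<^sub>m A) = (a * b :: complex) \<cdot>\<^sub>m A"
  by (rule eq_matI) auto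

lemma one_smult_m: "(1::complex) \<cdot>\<^sub>m A = A"
  by (rule eq_matI) auto

lemma stab_kron:
  assumes st: "stab_state n \<sigma>" and k: "k < 4"
  shows "stab_state (Suc n) (kron (outer 2 (psi1 k)) \<sigma>)"
proof -
  define d where "d = (2::nat)^n"
  have d0: "d > 0" by (simp add: d_def)
  have p2: "(2::nat)^Suc n = 2*d" by (simp add: d_def)
  obtain S \<psi> where Ssub: "S \<subseteq> pauli_group n" and Sone: "1\<^sub>m d \<in> S"
    and Scl: "\<forall>A\<in>S. \<forall>B\<in>S. A * B \<in> S \<and> A * B = B * A"
    and Sfin: "finite S" and Scard: "card S = 2^n" and Sneg: "- (1\<^sub>m d) \<notin> S"
    and psic: "\<psi> \<in> carrier_vec d" and psin: "(\<Sum>i<d. (cmod (\<psi> $ i))\<^sup>2) = 1"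
    and psifix: "\<forall>A\<in>S. A *\<^sub>v \<psi> = \<psi>"
    and psiu: "\<forall>\<phi>\<in>carrier_vec d. (\<forall>A\<in>S. A *\<^sub>v \<phi> = \<phi>) \<longrightarrow> (\<exists>c. \<phi> = c \<cdot>\<^sub>v \<psi>)"
    and sig: "\<sigma> = outer d \<psi>"
    using st unfolding stab_state_def d_def by blast
  have Scar: "\<forall>B\<in>S. B \<in> carrier_mat d d" using Ssub pauli_group_carrier unfolding d_def by blast
  obtain i0 where i0: "i0 < d" "\<psi> $ i0 \<noteq> 0" using nonzero_entry[OF psin] by blast
  have Snz: False if B: "B \<in> S" and z: "\<forall>i<d. \<forall>j<d. B $$ (i,j) = 0" for B
  proof -
    have Bc: "B \<in> carrier_mat d d" using Scar B by auto
    have "(B *\<^sub>v \<psi>) $ i0 = (\<Sum>t<d. B $$ (i0,t) * \<psi> $ t)" by (rule mult_vec_idx[OF Bc psic i0(1)])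
    also have "\<dots> = 0" using z i0 by simp
    finally show False using psifix B i0 by simp
  qed
  define Q where "Q = {1\<^sub>m 2, Pk k}"
  have Qcar: "\<forall>A\<in>Q. A \<in> carrier_mat 2 2" using Pk_carrier by (simp add: Q_def)
  have QQ: "A * C \<in> Q \<and> A * C = C * A" if "A \<in> Q" "C \<in> Q" for A C
    using that Pk_sq[OF k] Pk_carrier[of k] by (auto simp: Q_def)
  define S' where "S' = (\<lambda>(A,B). kron A B) ` (Q \<times> S)"
  define \<psi>' where "\<psi>' = kvec d (psi1 k) \<psi>"
  have cardQ: "card Q = 2" using Pk_ne_one[OF k] by (simp add: Q_def)
  have inj: "inj_on (\<lambda>(A,B). kron A B) (Q \<times> S)"
  proof (rule inj_onI, clarify)
    fix A B C D assume A: "A \<in> Q" and B: "B \<in> S" and C: "C \<in> Q" and D: "D \<in> S" and e: "kron A B = kron C D"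
    have Bc: "B \<in> carrier_mat d d" and Dc: "D \<in> carrier_mat d d" using Scar B D by auto
    show "A = C \<and> B = D"
    proof (cases "A = C")
      case True
      have "\<exists>a<2. \<exists>b<2. A $$ (a,b) \<noteq> 0"
      proof (cases "A = 1\<^sub>m 2")
        case True
        then show ?thesis by (intro exI[of _ 0] conjI) auto
      next
        case False
        then have "A = Pk k" using A by (simp add: Q_def)
        then show ?thesis using Pk_nz[OF k] by simp
      qed
      then obtain a b where ab: "a < 2" "b < 2" "A $$ (a,b) \<noteq> 0" by blast
      have "B = D" using kron_inj[OF _ Bc Dc ab] Qcar A e True by blast
      then show ?thesis using True by simp
    next
      case False
      then have "(A = 1\<^sub>m 2 \<and> C = Pk k) \<or> (A = Pk k \<and> C = 1\<^sub>m 2)" using A C by (auto simp: Q_def)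
      then show ?thesis
      proof
        assume h: "A = 1\<^sub>m 2 \<and> C = Pk k"
        then have "\<forall>i<d. \<forall>j<d. B $$ (i,j) = 0" using kron_disj[OF k Bc Dc] e by blast
        then show ?thesis using Snz B by blast
      next
        assume h: "A = Pk k \<and> C = 1\<^sub>m 2"
        then have "\<forall>i<d. \<forall>j<d. D $$ (i,j) = 0" using kron_disj[OF k Dc Bc] e by metis
        then show ?thesis using Snz D by blast
      qed
    qed
  qed
  have S'fin: "finite S'" unfolding S'_def Q_def using Sfin by simp
  have cardS': "card S' = 2^Suc n"
    unfolding S'_def card_image[OF inj] card_cartesian_product cardQ Scard by simp
  have S'sub: "S' \<subseteq> pauli_group (Suc n)"
  proof
    fix X assume "X \<in> S'"
    then obtain A B where A: "A \<in> Q" and B: "B \<in> S" and X: "X = kron A B" by (auto simp: S'_def)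
    obtain c Ps where Bd: "B = c \<cdot>\<^sub>m kron_list Ps" and c: "c \<in> {1, -1, \<i>, -\<i>}" and l: "length Ps = n"
      and P: "set Ps \<subseteq> {1\<^sub>m 2, pauliX, pauliY, pauliZ}"
      using Ssub B unfolding pauli_group_def by blast
    show "X \<in> pauli_group (Suc n)"
    proof (cases "A = 1\<^sub>m 2")
      case True
      then have "X = c \<cdot>\<^sub>m kron_list (1\<^sub>m 2 # Ps)" using X Bd by (simp add: kron_smult_right)
      then show ?thesis unfolding pauli_group_def using c l P by (intro CollectI exI[of _ c] exI[of _ "1\<^sub>m 2 # Ps"]) auto
    next
      case False
      then have "A = Pk k" using A by (simp add: Q_def)
      then have "X = (sgk k * c) \<cdot>\<^sub>m kron_list (Pb k # Ps)" using X Bd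
        by (simp add: kron_smult_right kron_smult_left Pk_def smult_smult_m mult.commute)
      moreover have "sgk k * c \<in> {1, -1, \<i>, -\<i>}" using c sgk_in[of k] by auto
      ultimately show ?thesis unfolding pauli_group_def using l P Pb_in[OF k]
        by (intro CollectI exI[of _ "sgk k * c"] exI[of _ "Pb k # Ps"]) auto
    qed
  qed
  have S'one: "1\<^sub>m (2^Suc n) \<in> S'"
  proof -
    have "1\<^sub>m (2^Suc n) = kron (1\<^sub>m 2) (1\<^sub>m d)" unfolding p2 kron_one ..
    then show ?thesis unfolding S'_def using Sone by (auto simp: Q_def)
  qed
  have S'cl: "\<forall>X\<in>S'. \<forall>Y\<in>S'. X * Y \<in> S' \<and> X * Y = Y * X"
  proof (intro ballI)
    fix X Y assume "X \<in> S'" "Y \<in> S'"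
    then obtain A B C D where A: "A \<in> Q" and B: "B \<in> S" and X: "X = kron A B"
      and C: "C \<in> Q" and D: "D \<in> S" and Y: "Y = kron C D" by (auto simp: S'_def)
    have Ac: "A \<in> carrier_mat 2 2" "C \<in> carrier_mat 2 2" using Qcar A C by auto
    have Bc: "B \<in> carrier_mat d d" "D \<in> carrier_mat d d" using Scar B D by auto
    have XY: "X * Y = kron (A*C) (B*D)" unfolding X Y by (rule kron_mult[OF Ac(1) Ac(2) Bc(1) Bc(2)])
    have YX: "Y * X = kron (C*A) (D*B)" unfolding X Y by (rule kron_mult[OF Ac(2) Ac(1) Bc(2) Bc(1)])
    show "X * Y \<in> S' \<and> X * Y = Y * X"
      unfolding XY YX S'_def using QQ[OF A C] Scl B D by (auto intro!: image_eqI[of _ _ "(A*C, B*D)"])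
  qed
  have S'neg: "- (1\<^sub>m (2^Suc n)) \<notin> S'"
  proof
    assume "- (1\<^sub>m (2^Suc n)) \<in> S'"
    then obtain A B where A: "A \<in> Q" and B: "B \<in> S" and X: "- (1\<^sub>m (2*d)) = kron A B"
      unfolding p2 by (auto simp: S'_def)
    have Bc: "B \<in> carrier_mat d d" using Scar B by auto
    show False
    proof (cases "A = 1\<^sub>m 2")
      case True
      then have "B = - (1\<^sub>m d)" using kron_one_negI[OF Bc] X by simp
      then show False using Sneg B by simp
    next
      case False
      then have "A = Pk k" using A by (simp add: Q_def)
      then show False using kron_Pk_negI[OF k Bc d0] X by simp
    qed
  qed
  have psi'c: "\<psi>' \<in> carrier_vec (2^Suc n)" unfolding p2 \<psi>'_def by (rule kvec_carrier)
  have psi'n: "(\<Sum>i<2^Suc n. (cmod (\<psi>' $ i))\<^sup>2) = 1"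
    unfolding p2 \<psi>'_def kvec_norm psin psi1_norm[OF k] by simp
  have psi'fix: "\<forall>X\<in>S'. X *\<^sub>v \<psi>' = \<psi>'"
  proof
    fix X assume "X \<in> S'"
    then obtain A B where A: "A \<in> Q" and B: "B \<in> S" and X: "X = kron A B" by (auto simp: S'_def)
    have Ac: "A \<in> carrier_mat 2 2" using Qcar A by auto
    have Bc: "B \<in> carrier_mat d d" using Scar B by auto
    have "A *\<^sub>v psi1 k = psi1 k" using A Pk_fix[OF k] psi1_carrier[of k] by (auto simp: Q_def)
    moreover have "B *\<^sub>v \<psi> = \<psi>" using psifix B by auto
    ultimately show "X *\<^sub>v \<psi>' = \<psi>'" unfolding X \<psi>'_def kron_mult_kvec[OF Ac Bc psi1_carrier psic] by simp
  qed
  have psi'u: "\<forall>\<phi>\<in>carrier_vec (2^Suc n). (\<forall>X\<in>S'. X *\<^sub>v \<phi> = \<phi>) \<longrightarrow> (\<exists>c. \<phi> = c \<cdot>\<^sub>v \<psi>')"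
  proof (intro ballI impI)
    fix \<phi> assume phic: "\<phi> \<in> carrier_vec (2^Suc n)" and fx: "\<forall>X\<in>S'. X *\<^sub>v \<phi> = \<phi>"
    have f1: "\<forall>B\<in>S. kron (1\<^sub>m 2) B *\<^sub>v \<phi> = \<phi>" using fx by (auto simp: S'_def Q_def)
    have fP: "kron (Pk k) (1\<^sub>m d) *\<^sub>v \<phi> = \<phi>" using fx Sone by (auto simp: S'_def Q_def)
    show "\<exists>c. \<phi> = c \<cdot>\<^sub>v \<psi>'" unfolding \<psi>'_def
      by (rule kron_uniq[OF k Scar Sone psiu psic i0]) (use phic p2 f1 fP in auto)
  qed
  have sig': "kron (outer 2 (psi1 k)) \<sigma> = outer (2^Suc n) \<psi>'"
    unfolding sig p2 \<psi>'_def by (rule outer_kron[OF d0])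
  show ?thesis unfolding stab_state_def
    apply (rule exI[of _ S'], rule exI[of _ \<psi>'])
    using S'sub S'one S'cl cardS' S'neg psi'c psi'n psi'fix psi'u sig' S'fin by blast
qed

lemma stab_base: "stab_state 0 (outer 1 (vec 1 (\<lambda>_. 1)))"
proof -
  have "(1\<^sub>m 1 :: complex mat) = 1 \<cdot>\<^sub>m kron_list []" by (simp add: one_smult_m)
  then have P: "(1\<^sub>m 1 :: complex mat) \<in> pauli_group 0" unfolding pauli_group_def by force
  have N: "- (1\<^sub>m 1) \<noteq> (1\<^sub>m 1 :: complex mat)"
  proof
    assume "- (1\<^sub>m 1) = (1\<^sub>m 1 :: complex mat)"
    then have "(- (1\<^sub>m 1) :: complex mat) $$ (0,0) = (1\<^sub>m 1 :: complex mat) $$ (0,0)" by simp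
    then show False by simp
  qed
  have U: "\<exists>c. \<phi> = c \<cdot>\<^sub>v vec 1 (\<lambda>_. 1)" if "\<phi> \<in> carrier_vec 1" for \<phi> :: "complex vec"
  proof -
    have "\<phi> = (\<phi> $ 0) \<cdot>\<^sub>v vec 1 (\<lambda>_. 1)"
      by (rule eq_vecI) (use that in auto)
    then show ?thesis by blast
  qed
  show ?thesis unfolding stab_state_def
    apply (rule exI[of _ "{1\<^sub>m 1}"], rule exI[of _ "vec 1 (\<lambda>_. 1)"])
    using P N U by auto
qed


section \<open>Real spanning of Hermitian matrices by stabilizer states\<close>

definition herm :: "nat \<Rightarrow> complex mat \<Rightarrow> bool" where
  "herm d H \<longleftrightarrow> H \<in> carrier_mat d d \<and> (\<forall>i<d. \<forall>j<d. H $$ (j,i) = cnj (H $$ (i,j)))"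

definition span_ok :: "nat \<Rightarrow> complex mat \<Rightarrow> bool" where
  "span_ok n H \<longleftrightarrow> (\<exists>L :: (real \<times> complex mat) list. (\<forall>x\<in>set L. stab_state n (snd x)) \<and>
     (\<forall>r<2^n. \<forall>s<2^n. H $$ (r,s) = (\<Sum>x\<leftarrow>L. complex_of_real (fst x) * snd x $$ (r,s))))"

lemma stab_carrier: "stab_state n \<sigma> \<Longrightarrow> \<sigma> \<in> carrier_mat (2^n) (2^n)"
  unfolding stab_state_def using outer_carrier by blast

lemma sum_lift:
  assumes T: "T \<in> carrier_mat 2 2" and L: "\<forall>x\<in>set L. snd x \<in> carrier_mat d d" and r: "r < 2*d" and s: "s < 2*d"
  shows "(\<Sum>x\<leftarrow>L. complex_of_real (fst x) * kron T (snd x) $$ (r,s)) =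
     T $$ (r div d, s div d) * (\<Sum>x\<leftarrow>L. complex_of_real (fst x) * snd x $$ (r mod d, s mod d))"
  using L
proof (induction L)
  case Nil
  then show ?case by simp
next
  case (Cons x L)
  then have xc: "snd x \<in> carrier_mat d d" by simp
  show ?case using Cons kron_idx[OF T xc r s] by (simp add: algebra_simps)
qed

lemma hh_sq2: "hh * (hh * 2) = 1"
  using hh_sq by (simp add: mult.assoc[symmetric])

lemma tau_entries:
  "outer 2 (psi1 0) $$ (0,0) = 1" "outer 2 (psi1 0) $$ (0,1) = 0" "outer 2 (psi1 0) $$ (1,0) = 0" "outer 2 (psi1 0) $$ (1,1) = 0"
  "outer 2 (psi1 1) $$ (0,0) = 0" "outer 2 (psi1 1) $$ (0,1) = 0" "outer 2 (psi1 1) $$ (1,0) = 0" "outer 2 (psi1 1) $$ (1,1) = 1"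
  "outer 2 (psi1 2) $$ (0,0) = 1/2" "outer 2 (psi1 2) $$ (0,1) = 1/2" "outer 2 (psi1 2) $$ (1,0) = 1/2" "outer 2 (psi1 2) $$ (1,1) = 1/2"
  "outer 2 (psi1 3) $$ (0,0) = 1/2" "outer 2 (psi1 3) $$ (0,1) = -\<i>/2" "outer 2 (psi1 3) $$ (1,0) = \<i>/2" "outer 2 (psi1 3) $$ (1,1) = 1/2"
  by (simp_all add: outer_def psi1_def hh_sq hh_sq2 algebra_simps)

lemma span_all: "herm (2^n) H \<Longrightarrow> span_ok n H"
proof (induction n arbitrary: H)
  case 0
  then have H: "H \<in> carrier_mat 1 1" and h: "H $$ (0,0) = cnj (H $$ (0,0))" by (auto simp: herm_def)
  have "Im (H $$ (0,0)) = Im (cnj (H $$ (0,0)))" using h by simp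
  then have "Im (H $$ (0,0)) = 0" by simp
  then have "H $$ (0,0) = complex_of_real (Re (H $$ (0,0)))" by (simp add: complex_eq_iff)
  moreover have "outer 1 (vec 1 (\<lambda>_. 1)) $$ (0,0) = 1" by (simp add: outer_def)
  ultimately show ?case unfolding span_ok_def using stab_base
    by (intro exI[of _ "[(Re (H $$ (0,0)), outer 1 (vec 1 (\<lambda>_. 1)))]"]) auto
next
  case (Suc n H)
  define d where "d = (2::nat)^n"
  have p2: "(2::nat)^Suc n = 2*d" by (simp add: d_def)
  have Hh2: "herm (2*d) H" using Suc.prems unfolding p2 .
  then have Hc: "H \<in> carrier_mat (2*d) (2*d)" and Hh: "\<forall>i<2*d. \<forall>j<2*d. H $$ (j,i) = cnj (H $$ (i,j))"
    unfolding herm_def by blast+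
  define u where "u = (\<lambda>i j. H $$ (i, d+j))"
  define w where "w = (\<lambda>i j. H $$ (d+i, j))"
  define Gp where "Gp = (\<lambda>i j. u i j + w i j)"
  define Gi where "Gi = (\<lambda>i j. \<i> * (u i j - w i j))"
  define G0 where "G0 = (\<lambda>i j. H $$ (i,j) - (Gp i j + Gi i j) / 2)"
  define G1 where "G1 = (\<lambda>i j. H $$ (d+i,d+j) - (Gp i j + Gi i j) / 2)"
  have uw: "u j i = cnj (w i j)" "w j i = cnj (u i j)" if "i < d" "j < d" for i j
  proof -
    have "i < 2*d" "j < 2*d" "d+i < 2*d" "d+j < 2*d" using that by auto
    then show "u j i = cnj (w i j)" "w j i = cnj (u i j)"
      using Hh[rule_format, of "d+i" j] Hh[rule_format, of i "d+j"] by (simp_all add: u_def w_def)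
  qed
  have hp: "Gp j i = cnj (Gp i j)" if "i < d" "j < d" for i j
    using uw[OF that] by (simp add: Gp_def)
  have hi: "Gi j i = cnj (Gi i j)" if "i < d" "j < d" for i j
    using uw[OF that] by (simp add: Gi_def algebra_simps)
  have h0: "G0 j i = cnj (G0 i j)" if "i < d" "j < d" for i j
  proof -
    have "i < 2*d" "j < 2*d" using that by auto
    then show ?thesis using hp[OF that] hi[OF that] Hh[rule_format, of i j] by (simp add: G0_def)
  qed
  have h1: "G1 j i = cnj (G1 i j)" if "i < d" "j < d" for i j
  proof -
    have "d+i < 2*d" "d+j < 2*d" using that by auto
    then show ?thesis using hp[OF that] hi[OF that] Hh[rule_format, of "d+i" "d+j"] by (simp add: G1_def)
  qed
  have IH: "\<exists>L. (\<forall>x\<in>set L. stab_state n (snd x)) \<and>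
      (\<forall>r<d. \<forall>s<d. G r s = (\<Sum>x\<leftarrow>L. complex_of_real (fst x) * snd x $$ (r,s)))"
    if hG: "\<And>i j. i < d \<Longrightarrow> j < d \<Longrightarrow> G j i = cnj (G i j)" for G
  proof -
    have "herm d (mat d d (\<lambda>(i,j). G i j))" unfolding herm_def
    proof (intro conjI allI impI)
      fix i j assume "i < d" "j < d"
      then show "mat d d (\<lambda>(i,j). G i j) $$ (j,i) = cnj (mat d d (\<lambda>(i,j). G i j) $$ (i,j))"
        using hG[of i j] by simp
    qed simp
    then have "span_ok n (mat d d (\<lambda>(i,j). G i j))" using Suc.IH unfolding d_def by blast
    then obtain L where L1: "\<forall>x\<in>set L. stab_state n (snd x)"
      and L2: "\<forall>r<d. \<forall>s<d. mat d d (\<lambda>(i,j). G i j) $$ (r,s) = (\<Sum>x\<leftarrow>L. complex_of_real (fst x) * snd x $$ (r,s))"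
      unfolding span_ok_def d_def by blast
    have "\<forall>r<d. \<forall>s<d. G r s = (\<Sum>x\<leftarrow>L. complex_of_real (fst x) * snd x $$ (r,s))"
    proof (intro allI impI)
      fix r s assume r: "r < d" and s: "s < d"
      then show "G r s = (\<Sum>x\<leftarrow>L. complex_of_real (fst x) * snd x $$ (r,s))" using L2 by simp
    qed
    then show ?thesis using L1 by blast
  qed
  obtain L0 where L0: "\<forall>x\<in>set L0. stab_state n (snd x)"
    "\<forall>r<d. \<forall>s<d. G0 r s = (\<Sum>x\<leftarrow>L0. complex_of_real (fst x) * snd x $$ (r,s))"
    using IH[of G0, OF h0] by blast
  obtain L1 where L1: "\<forall>x\<in>set L1. stab_state n (snd x)"
    "\<forall>r<d. \<forall>s<d. G1 r s = (\<Sum>x\<leftarrow>L1. complex_of_real (fst x) * snd x $$ (r,s))"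
    using IH[of G1, OF h1] by blast
  obtain L2 where L2: "\<forall>x\<in>set L2. stab_state n (snd x)"
    "\<forall>r<d. \<forall>s<d. Gp r s = (\<Sum>x\<leftarrow>L2. complex_of_real (fst x) * snd x $$ (r,s))"
    using IH[of Gp, OF hp] by blast
  obtain L3 where L3: "\<forall>x\<in>set L3. stab_state n (snd x)"
    "\<forall>r<d. \<forall>s<d. Gi r s = (\<Sum>x\<leftarrow>L3. complex_of_real (fst x) * snd x $$ (r,s))"
    using IH[of Gi, OF hi] by blast
  define lift where "lift = (\<lambda>k (x :: real \<times> complex mat). (fst x, kron (outer 2 (psi1 k)) (snd x)))"
  define L where "L = map (lift 0) L0 @ map (lift 1) L1 @ map (lift 2) L2 @ map (lift 3) L3"
  have Lst: "\<forall>x\<in>set L. stab_state (Suc n) (snd x)"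
    unfolding L_def lift_def using L0(1) L1(1) L2(1) L3(1) stab_kron by auto
  have carL: "\<forall>x\<in>set Lk. snd x \<in> carrier_mat d d" if "\<forall>x\<in>set Lk. stab_state n (snd x)" for Lk :: "(real \<times> complex mat) list"
    using that stab_carrier unfolding d_def by blast
  have T: "outer 2 (psi1 k) \<in> carrier_mat 2 2" for k by (rule outer_carrier)
  have liftsum: "(\<Sum>x\<leftarrow>map (lift k) Lk. complex_of_real (fst x) * snd x $$ (r,s)) =
      outer 2 (psi1 k) $$ (r div d, s div d) * (\<Sum>x\<leftarrow>Lk. complex_of_real (fst x) * snd x $$ (r mod d, s mod d))"
    if "\<forall>x\<in>set Lk. stab_state n (snd x)" "r < 2*d" "s < 2*d" for k r s and Lk :: "(real \<times> complex mat) list"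
  proof -
    have "(\<Sum>x\<leftarrow>map (lift k) Lk. complex_of_real (fst x) * snd x $$ (r,s)) =
       (\<Sum>x\<leftarrow>Lk. complex_of_real (fst x) * kron (outer 2 (psi1 k)) (snd x) $$ (r,s))"
      by (simp add: lift_def o_def)
    also have "\<dots> = outer 2 (psi1 k) $$ (r div d, s div d) * (\<Sum>x\<leftarrow>Lk. complex_of_real (fst x) * snd x $$ (r mod d, s mod d))"
      by (rule sum_lift[OF T carL[OF that(1)] that(2,3)])
    finally show ?thesis .
  qed
  have blk: "H $$ (a*d+i, b*d+j) = outer 2 (psi1 0) $$ (a,b) * G0 i j + outer 2 (psi1 1) $$ (a,b) * G1 i j
     + outer 2 (psi1 2) $$ (a,b) * Gp i j + outer 2 (psi1 3) $$ (a,b) * Gi i j" if "a < 2" "b < 2" for a b i j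
  proof -
    have m: "\<i> * (\<i> * z) = - z" for z :: complex by (simp add: mult.assoc[symmetric])
    have "a = 0 \<or> a = 1" "b = 0 \<or> b = 1" using that by auto
    then show ?thesis
      by (elim disjE) (simp_all add: tau_entries tau_entries[unfolded One_nat_def] G0_def G1_def Gp_def Gi_def u_def w_def algebra_simps m add_divide_distrib diff_divide_distrib)
  qed
  have ent: "H $$ (r,s) = (\<Sum>x\<leftarrow>L. complex_of_real (fst x) * snd x $$ (r,s))" if r: "r < 2*d" and s: "s < 2*d" for r s
  proof -
    have d0: "d > 0" by (simp add: d_def)
    have ab: "r div d < 2" "s div d < 2" using r s by (simp_all add: less_mult_imp_div_less mult.commute)
    have ij: "r mod d < d" "s mod d < d" using d0 by simp_all
    have "H $$ (r,s) = H $$ ((r div d) * d + r mod d, (s div d) * d + s mod d)" by simp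
    also have "\<dots> = outer 2 (psi1 0) $$ (r div d, s div d) * G0 (r mod d) (s mod d) + outer 2 (psi1 1) $$ (r div d, s div d) * G1 (r mod d) (s mod d)
     + outer 2 (psi1 2) $$ (r div d, s div d) * Gp (r mod d) (s mod d) + outer 2 (psi1 3) $$ (r div d, s div d) * Gi (r mod d) (s mod d)"
      by (rule blk[OF ab])
    also have "\<dots> = (\<Sum>x\<leftarrow>L. complex_of_real (fst x) * snd x $$ (r,s))"
      unfolding L_def sum_list_append map_append liftsum[OF L0(1) r s] liftsum[OF L1(1) r s] liftsum[OF L2(1) r s] liftsum[OF L3(1) r s]
      using L0(2) L1(2) L2(2) L3(2) ij by (simp add: add.assoc)
    finally show ?thesis .
  qed
  show ?case unfolding span_ok_def p2 using Lst ent by blast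
qed


section \<open>Wigner function facts\<close>

lemma pauli_dims[simp]: "dim_row pauliX = 2" "dim_col pauliX = 2" "dim_row pauliY = 2" "dim_col pauliY = 2"
  "dim_row pauliZ = 2" "dim_col pauliZ = 2"
  by (simp_all add: pauliX_def pauliY_def pauliZ_def)

lemma phase_point_carrier: "phase_point qp \<in> carrier_mat 2 2"
proof -
  obtain q p where qp: "qp = (q,p)" by (cases qp)
  have I: "(1\<^sub>m 2 :: complex mat) \<in> carrier_mat 2 2" by (rule one_carrier_mat)
  have X: "sg p \<cdot>\<^sub>m pauliX \<in> carrier_mat 2 2" by (rule smult_carrier_mat[OF pauli_carrier(1)])
  have Y: "(sg q * sg p) \<cdot>\<^sub>m pauliY \<in> carrier_mat 2 2" by (rule smult_carrier_mat[OF pauli_carrier(2)])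
  have Z: "sg q \<cdot>\<^sub>m pauliZ \<in> carrier_mat 2 2" by (rule smult_carrier_mat[OF pauli_carrier(3)])
  have "1\<^sub>m 2 + sg p \<cdot>\<^sub>m pauliX + (sg q * sg p) \<cdot>\<^sub>m pauliY + sg q \<cdot>\<^sub>m pauliZ \<in> carrier_mat 2 2"
    by (intro add_carrier_mat I X Y Z)
  then have "(1/2) \<cdot>\<^sub>m (1\<^sub>m 2 + sg p \<cdot>\<^sub>m pauliX + (sg q * sg p) \<cdot>\<^sub>m pauliY + sg q \<cdot>\<^sub>m pauliZ) \<in> carrier_mat 2 2"
    by (rule smult_carrier_mat)
  then show ?thesis unfolding qp phase_point_def by simp
qed

lemma phase_op_carrier: "length \<alpha> = n \<Longrightarrow> phase_op \<alpha> \<in> carrier_mat (2^n) (2^n)"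
proof -
  assume l: "length \<alpha> = n"
  have "set (map phase_point \<alpha>) \<subseteq> carrier_mat 2 2" using phase_point_carrier by auto
  then show ?thesis unfolding phase_op_def using kron_list_carrier[of "map phase_point \<alpha>"] l by simp
qed

lemma pauli_entry_bound: "i < 2 \<Longrightarrow> j < 2 \<Longrightarrow>
   cmod (pauliX $$ (i,j)) \<le> 1 \<and> cmod (pauliY $$ (i,j)) \<le> 1 \<and> cmod (pauliZ $$ (i,j)) \<le> 1 \<and> cmod ((1\<^sub>m 2 :: complex mat) $$ (i,j)) \<le> 1"
proof -
  assume "i < 2" "j < 2"
  then have "i = 0 \<or> i = 1" "j = 0 \<or> j = 1" by auto
  then show ?thesis by (elim disjE) (simp_all add: pauliX_def pauliY_def pauliZ_def)
qed

lemma cmod_sg[simp]: "cmod (sg b) = 1" by (simp add: sg_def)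

lemma phase_point_bound: "i < 2 \<Longrightarrow> j < 2 \<Longrightarrow> cmod (phase_point qp $$ (i,j)) \<le> 2"
proof -
  assume i: "i < 2" and j: "j < 2"
  obtain q p where qp: "qp = (q,p)" by (cases qp)
  let ?I = "(1\<^sub>m 2 :: complex mat) $$ (i,j)"
  have e: "phase_point qp $$ (i,j) = 1/2 * (?I + sg p * pauliX $$ (i,j) + (sg q * sg p) * pauliY $$ (i,j) + sg q * pauliZ $$ (i,j))"
    using i j by (simp add: phase_point_def qp)
  have "cmod (?I + sg p * pauliX $$ (i,j) + (sg q * sg p) * pauliY $$ (i,j) + sg q * pauliZ $$ (i,j))
     \<le> cmod ?I + cmod (sg p * pauliX $$ (i,j)) + cmod ((sg q * sg p) * pauliY $$ (i,j)) + cmod (sg q * pauliZ $$ (i,j))"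
    using norm_triangle_ineq[of "?I + sg p * pauliX $$ (i,j) + (sg q * sg p) * pauliY $$ (i,j)" "sg q * pauliZ $$ (i,j)"]
      norm_triangle_ineq[of "?I + sg p * pauliX $$ (i,j)" "(sg q * sg p) * pauliY $$ (i,j)"]
      norm_triangle_ineq[of "?I" "sg p * pauliX $$ (i,j)"] by linarith
  also have "\<dots> \<le> 1 + 1 + 1 + 1" using pauli_entry_bound[OF i j] by (simp add: norm_mult)
  finally show ?thesis unfolding e by (simp add: norm_mult)
qed

lemma kron_entry_bound:
  assumes A: "\<forall>i<dim_row A. \<forall>j<dim_col A. cmod (A $$ (i,j)) \<le> a"
    and B: "\<forall>i<dim_row B. \<forall>j<dim_col B. cmod (B $$ (i,j)) \<le> b" and a: "0 \<le> a"
  shows "\<forall>i<dim_row (kron A B). \<forall>j<dim_col (kron A B). cmod (kron A B $$ (i,j)) \<le> a * b"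
proof (intro allI impI)
  fix i j assume i: "i < dim_row (kron A B)" and j: "j < dim_col (kron A B)"
  then have i': "i < dim_row A * dim_row B" and j': "j < dim_col A * dim_col B" by auto
  then have pr: "dim_row B > 0" and pc: "dim_col B > 0" by (auto intro: gr0I)
  have d1: "i div dim_row B < dim_row A" "j div dim_col B < dim_col A" using i' j'
    by (simp_all add: less_mult_imp_div_less)
  have d2: "i mod dim_row B < dim_row B" "j mod dim_col B < dim_col B" using pr pc by simp_all
  have "kron A B $$ (i,j) = A $$ (i div dim_row B, j div dim_col B) * B $$ (i mod dim_row B, j mod dim_col B)"
    using i' j' by (simp add: kron_def)
  then have "cmod (kron A B $$ (i,j)) = cmod (A $$ (i div dim_row B, j div dim_col B)) * cmod (B $$ (i mod dim_row B, j mod dim_col B))"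
    by (simp add: norm_mult)
  also have "\<dots> \<le> a * b" using A d1 B d2 a by (intro mult_mono) auto
  finally show "cmod (kron A B $$ (i,j)) \<le> a * b" .
qed

lemma phase_op_bound: "\<forall>i<dim_row (phase_op \<alpha>). \<forall>j<dim_col (phase_op \<alpha>). cmod (phase_op \<alpha> $$ (i,j)) \<le> 2 ^ length \<alpha>"
  unfolding phase_op_def
proof (induction \<alpha>)
  case Nil
  show ?case by auto
next
  case (Cons x xs)
  have "\<forall>i<dim_row (phase_point x). \<forall>j<dim_col (phase_point x). cmod (phase_point x $$ (i,j)) \<le> 2"
    using phase_point_bound phase_point_carrier[of x] by auto
  then show ?case using kron_entry_bound[OF _ Cons.IH] by simp
qed

lemma trace_prod: "R \<in> carrier_mat d d \<Longrightarrow> A \<in> carrier_mat d d \<Longrightarrow>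
   mtrace (R * A) = (\<Sum>r<d. \<Sum>s<d. R $$ (r,s) * A $$ (s,r))"
proof -
  assume R: "R \<in> carrier_mat d d" and A: "A \<in> carrier_mat d d"
  have "mtrace (R * A) = (\<Sum>r<d. (R * A) $$ (r,r))" unfolding mtrace_def using R by simp
  also have "\<dots> = (\<Sum>r<d. \<Sum>s<d. R $$ (r,s) * A $$ (s,r))"
    by (rule sum.cong[OF refl], rule mult_idx[OF R A]) auto
  finally show ?thesis .
qed

lemma wigner_lin:
  assumes R: "R \<in> carrier_mat (2^n) (2^n)" and S: "\<forall>i<k. \<sigma> i \<in> carrier_mat (2^n) (2^n)"
    and e: "\<forall>r<2^n. \<forall>s<2^n. R $$ (r,s) = (\<Sum>i<k. complex_of_real (a i) * \<sigma> i $$ (r,s))"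
    and l: "length \<alpha> = n"
  shows "wigner n R \<alpha> = (\<Sum>i<k. a i * wigner n (\<sigma> i) \<alpha>)"
proof -
  let ?d = "(2::nat)^n"
  have A: "phase_op \<alpha> \<in> carrier_mat ?d ?d" by (rule phase_op_carrier[OF l])
  have "mtrace (R * phase_op \<alpha>) = (\<Sum>r<?d. \<Sum>s<?d. R $$ (r,s) * phase_op \<alpha> $$ (s,r))"
    by (rule trace_prod[OF R A])
  also have "\<dots> = (\<Sum>r<?d. \<Sum>s<?d. \<Sum>i<k. complex_of_real (a i) * (\<sigma> i $$ (r,s) * phase_op \<alpha> $$ (s,r)))"
    using e by (simp add: sum_distrib_right mult.assoc)
  also have "\<dots> = (\<Sum>i<k. complex_of_real (a i) * (\<Sum>r<?d. \<Sum>s<?d. \<sigma> i $$ (r,s) * phase_op \<alpha> $$ (s,r)))"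
    by (simp add: sum_distrib_left sum.swap[of _ "{..<k}"])
  also have "\<dots> = (\<Sum>i<k. complex_of_real (a i) * mtrace (\<sigma> i * phase_op \<alpha>))"
    using trace_prod[OF _ A] S by simp
  finally have "Re (mtrace (R * phase_op \<alpha>)) = (\<Sum>i<k. a i * Re (mtrace (\<sigma> i * phase_op \<alpha>)))"
    by (simp add: Re_sum)
  then show ?thesis unfolding wigner_def by (simp add: sum_divide_distrib)
qed

lemma stab_trace: "stab_state n \<sigma> \<Longrightarrow> mtrace \<sigma> = 1"
proof -
  assume "stab_state n \<sigma>"
  then obtain \<psi> where n1: "(\<Sum>i<2^n. (cmod (\<psi> $ i))\<^sup>2) = 1" and s: "\<sigma> = outer (2^n) \<psi>"
    unfolding stab_state_def by blast
  have "mtrace \<sigma> = (\<Sum>i<2^n. \<psi> $ i * cnj (\<psi> $ i))" unfolding s mtrace_def by (simp add: outer_def)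
  also have "\<dots> = (\<Sum>i<2^n. complex_of_real ((cmod (\<psi> $ i))\<^sup>2))"
    by (rule sum.cong[OF refl], rule complex_norm_square[symmetric])
  also have "\<dots> = complex_of_real (\<Sum>i<2^n. (cmod (\<psi> $ i))\<^sup>2)" by simp
  finally show ?thesis using n1 by simp
qed

lemma stab_wigner_bound: "stab_state n \<sigma> \<Longrightarrow> length \<alpha> = n \<Longrightarrow> \<bar>wigner n \<sigma> \<alpha>\<bar> \<le> 2^n * 2^n"
proof -
  assume st: "stab_state n \<sigma>" and l: "length \<alpha> = n"
  let ?d = "(2::nat)^n"
  obtain \<psi> where n1: "(\<Sum>i<2^n. (cmod (\<psi> $ i))\<^sup>2) = 1" and sig: "\<sigma> = outer (2^n) \<psi>"
    using st unfolding stab_state_def by blast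
  have A: "phase_op \<alpha> \<in> carrier_mat ?d ?d" by (rule phase_op_carrier[OF l])
  have pb: "cmod (\<psi> $ i) \<le> 1" if "i < ?d" for i
  proof -
    have "(cmod (\<psi> $ i))\<^sup>2 \<le> (\<Sum>i<2^n. (cmod (\<psi> $ i))\<^sup>2)"
      by (rule member_le_sum) (use that in auto)
    then have "(cmod (\<psi> $ i))\<^sup>2 \<le> 1\<^sup>2" using n1 by simp
    then show ?thesis by (rule power2_le_imp_le) simp
  qed
  have ab: "cmod (phase_op \<alpha> $$ (s,r)) \<le> 2^n" if "s < ?d" "r < ?d" for r s
    using phase_op_bound[of \<alpha>] A that l by auto
  have tb: "cmod (\<sigma> $$ (r,s) * phase_op \<alpha> $$ (s,r)) \<le> 2^n" if r: "r < ?d" and s: "s < ?d" for r s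
  proof -
    have "cmod (\<sigma> $$ (r,s) * phase_op \<alpha> $$ (s,r)) = cmod (\<psi> $ r) * cmod (\<psi> $ s) * cmod (phase_op \<alpha> $$ (s,r))"
      using r s by (simp add: sig outer_def norm_mult)
    also have "\<dots> \<le> 1 * 1 * 2^n" using pb[OF r] pb[OF s] ab[OF s r]
      by (intro mult_mono) auto
    finally show ?thesis by simp
  qed
  have Sc: "\<sigma> \<in> carrier_mat ?d ?d" by (simp add: sig outer_carrier)
  have "cmod (mtrace (\<sigma> * phase_op \<alpha>)) \<le> (\<Sum>r<?d. \<Sum>s<?d. cmod (\<sigma> $$ (r,s) * phase_op \<alpha> $$ (s,r)))"
    unfolding trace_prod[OF Sc A] by (rule order_trans[OF norm_sum sum_mono[OF norm_sum]])
  also have "\<dots> \<le> (\<Sum>r<?d. \<Sum>s<?d. (2::real)^n)" using tb by (intro sum_mono) auto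
  also have "\<dots> = 2^n * 2^n * 2^n" by simp
  finally have "\<bar>Re (mtrace (\<sigma> * phase_op \<alpha>))\<bar> \<le> 2^n * 2^n * 2^n" using abs_Re_le_cmod order_trans by blast
  then show ?thesis unfolding wigner_def by (simp add: abs_div divide_le_eq)
qed


lemma finite_phase_space: "finite (phase_space n)"
proof -
  have "phase_space n = {xs. set xs \<subseteq> (UNIV :: (bool \<times> bool) set) \<and> length xs = n}"
    by (auto simp: phase_space_def)
  then show ?thesis using finite_lists_length_eq[of "UNIV :: (bool \<times> bool) set" n] by simp
qed

lemma density_herm: "density_op n \<rho> \<Longrightarrow> herm (2^n) \<rho>"
  unfolding density_op_def herm_def by blast

lemma decomp_exists:
  assumes "density_op n \<rho>"
  shows "\<exists>(k::nat) (a::nat \<Rightarrow> real) \<sigma>. (\<forall>i<k. stab_state n (\<sigma> i)) \<and>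
     (\<forall>r<2^n. \<forall>s<2^n. \<rho> $$ (r,s) = (\<Sum>i<k. complex_of_real (a i) * \<sigma> i $$ (r,s)))"
proof -
  obtain L :: "(real \<times> complex mat) list" where L1: "\<forall>x\<in>set L. stab_state n (snd x)"
    and L2: "\<forall>r<2^n. \<forall>s<2^n. \<rho> $$ (r,s) = (\<Sum>x\<leftarrow>L. complex_of_real (fst x) * snd x $$ (r,s))"
    using span_all[OF density_herm[OF assms]] unfolding span_ok_def by blast
  have conv: "(\<Sum>x\<leftarrow>L. f x) = (\<Sum>i<length L. f (L ! i))" for f :: "real \<times> complex mat \<Rightarrow> complex"
    by (simp add: sum_list_sum_nth atLeast0LessThan)
  have "(\<forall>i<length L. stab_state n (snd (L ! i))) \<and>
     (\<forall>r<2^n. \<forall>s<2^n. \<rho> $$ (r,s) = (\<Sum>i<length L. complex_of_real (fst (L ! i)) * snd (L ! i) $$ (r,s)))"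
    using L1 L2 conv by (simp add: conv)
  then show ?thesis
    by (intro exI[where x="length L"] exI[where x="\<lambda>i. fst (L ! i)"] exI[where x="\<lambda>i. snd (L ! i)"])
qed

lemma key_bound:
  fixes k :: nat and a :: "nat \<Rightarrow> real"
  assumes dens: "density_op n \<rho>" and st: "\<forall>i<k. stab_state n (\<sigma> i)"
    and e: "\<forall>r<2^n. \<forall>s<2^n. \<rho> $$ (r,s) = (\<Sum>i<k. complex_of_real (a i) * \<sigma> i $$ (r,s))"
  shows "1 + wigner_distance n \<rho> / M_max n \<le> (\<Sum>i<k. \<bar>a i\<bar>) \<and> 0 \<le> wigner_distance n \<rho> \<and> 0 \<le> M_max n"
proof -
  let ?d = "(2::nat)^n"
  have Rc: "\<rho> \<in> carrier_mat ?d ?d" and Rtr: "mtrace \<rho> = 1" using dens unfolding density_op_def by auto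
  have Sc: "\<forall>i<k. \<sigma> i \<in> carrier_mat ?d ?d" using st stab_carrier by blast
  have "mtrace \<rho> = (\<Sum>r<?d. \<rho> $$ (r,r))" unfolding mtrace_def using Rc by simp
  also have "\<dots> = (\<Sum>r<?d. \<Sum>i<k. complex_of_real (a i) * \<sigma> i $$ (r,r))" using e by simp
  also have "\<dots> = (\<Sum>i<k. complex_of_real (a i) * (\<Sum>r<?d. \<sigma> i $$ (r,r)))"
    by (simp add: sum_distrib_left sum.swap[of _ "{..<k}"])
  also have "\<dots> = (\<Sum>i<k. complex_of_real (a i) * mtrace (\<sigma> i))"
  proof (rule sum.cong[OF refl])
    fix i assume "i \<in> {..<k}"
    then have "\<sigma> i \<in> carrier_mat ?d ?d" using Sc by blast
    then have "dim_row (\<sigma> i) = ?d" by (rule carrier_matD)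
    then show "complex_of_real (a i) * (\<Sum>r<?d. \<sigma> i $$ (r,r)) = complex_of_real (a i) * mtrace (\<sigma> i)"
      by (simp add: mtrace_def)
  qed
  also have "\<dots> = (\<Sum>i<k. complex_of_real (a i))"
  proof (rule sum.cong[OF refl])
    fix i assume "i \<in> {..<k}"
    then have "mtrace (\<sigma> i) = 1" using st stab_trace by blast
    then show "complex_of_real (a i) * mtrace (\<sigma> i) = complex_of_real (a i)" by simp
  qed
  also have "\<dots> = complex_of_real (\<Sum>i<k. a i)" by simp
  finally have "complex_of_real (\<Sum>i<k. a i) = 1" using Rtr by simp
  then have sa: "(\<Sum>i<k. a i) = 1" by (simp only: of_real_eq_1_iff)
  have k0: "0 < k" using sa by (cases k) auto
  define PS where "PS = phase_space n"
  have PSf: "finite PS" unfolding PS_def by (rule finite_phase_space)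
  define Xs where "Xs = {l1_dist n (wigner n \<sigma>') (\<lambda>_. 0) | \<sigma>'. stab_state n \<sigma>'}"
  have l1W: "l1_dist n (wigner n \<sigma>') (\<lambda>_. 0) = (\<Sum>\<alpha>\<in>PS. \<bar>wigner n \<sigma>' \<alpha>\<bar>)" for \<sigma>'
    by (simp add: l1_dist_def PS_def)
  have bddX: "bdd_above Xs"
  proof (rule bdd_aboveI)
    fix x assume "x \<in> Xs"
    then obtain \<sigma>' where st': "stab_state n \<sigma>'" and x: "x = l1_dist n (wigner n \<sigma>') (\<lambda>_. 0)"
      by (auto simp: Xs_def)
    have "x = (\<Sum>\<alpha>\<in>PS. \<bar>wigner n \<sigma>' \<alpha>\<bar>)" using x l1W by simp
    also have "\<dots> \<le> (\<Sum>\<alpha>\<in>PS. 2^n * 2^n)"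
      by (rule sum_mono) (use stab_wigner_bound[OF st'] in \<open>auto simp: PS_def phase_space_def\<close>)
    finally show "x \<le> real (card PS) * (2^n * 2^n)" by simp
  qed
  define M where "M = M_max n"
  have MXs: "M = Sup Xs" unfolding M_def M_max_def Xs_def ..
  have Mi: "(\<Sum>\<alpha>\<in>PS. \<bar>wigner n (\<sigma> i) \<alpha>\<bar>) \<le> M" if "i < k" for i
  proof -
    have "l1_dist n (wigner n (\<sigma> i)) (\<lambda>_. 0) \<in> Xs" using st that by (auto simp: Xs_def)
    then have "l1_dist n (wigner n (\<sigma> i)) (\<lambda>_. 0) \<le> M" unfolding MXs using bddX by (rule cSup_upper)
    then show ?thesis using l1W by simp
  qed
  have M0: "0 \<le> M" using Mi[OF k0] by (meson order_trans sum_nonneg abs_ge_zero)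
  define ap where "ap i = max (a i) 0" for i
  define an where "an i = max (- a i) 0" for i
  define P where "P = (\<Sum>i<k. ap i)"
  define N where "N = (\<Sum>i<k. an i)"
  have apan: "a i = ap i - an i" "\<bar>a i\<bar> = ap i + an i" "0 \<le> ap i" "0 \<le> an i" for i
    by (auto simp: ap_def an_def)
  have PN: "P - N = 1" using sa unfolding P_def N_def by (simp add: apan(1) sum_subtractf)
  have PN2: "(\<Sum>i<k. \<bar>a i\<bar>) = P + N" unfolding P_def N_def by (simp add: apan(2) sum.distrib)
  have N0: "0 \<le> N" unfolding N_def by (rule sum_nonneg) (simp add: apan)
  have P1: "1 \<le> P" using PN N0 by simp
  define g where "g = (\<lambda>\<alpha>. \<Sum>i<k. (ap i / P) * wigner n (\<sigma> i) \<alpha>)"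
  have gW: "g \<in> W_free n"
  proof -
    have "(\<Sum>i<k. ap i / P) = 1" using P1 by (simp add: P_def[symmetric] sum_divide_distrib[symmetric])
    moreover have "\<forall>i<k. 0 \<le> ap i / P \<and> stab_state n (\<sigma> i)" using st P1 apan(3) by simp
    ultimately show ?thesis unfolding W_free_def g_def mem_Collect_eq
      by (intro exI[where x=k] exI[where x="\<lambda>i. ap i / P"] exI[where x=\<sigma>] conjI) simp_all
  qed
  define Ds where "Ds = {l1_dist n (wigner n \<rho>) f | f. f \<in> W_free n}"
  have bddD: "bdd_below Ds"
    by (rule bdd_belowI[of _ 0]) (auto simp: Ds_def l1_dist_def intro: sum_nonneg)
  have gD: "l1_dist n (wigner n \<rho>) g \<in> Ds" using gW by (auto simp: Ds_def)
  have C_le: "wigner_distance n \<rho> \<le> l1_dist n (wigner n \<rho>) g"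
    unfolding wigner_distance_def Ds_def[symmetric] using gD bddD by (rule cInf_lower)
  have C0: "0 \<le> wigner_distance n \<rho>"
    unfolding wigner_distance_def Ds_def[symmetric]
    by (rule cInf_greatest) (use gD in \<open>auto simp: Ds_def l1_dist_def intro: sum_nonneg\<close>)
  define cf where "cf i = ap i * (N / P) + an i" for i
  have coef: "\<bar>a i - ap i / P\<bar> \<le> cf i" for i
  proof (cases "0 \<le> a i")
    case True
    then have "ap i = a i" "an i = 0" by (auto simp: ap_def an_def)
    moreover have "a i - a i / P = a i * (N / P)" using P1 PN by (simp add: field_simps)
    moreover have "0 \<le> a i * (N / P)" using True N0 P1 by simp
    ultimately have "\<bar>a i - ap i / P\<bar> = a i * (N / P)" by (metis abs_of_nonneg)
    moreover have "cf i = a i * (N / P)" using \<open>ap i = a i\<close> \<open>an i = 0\<close> by (simp add: cf_def)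
    ultimately show ?thesis by simp
  next
    case False
    then have "ap i = 0" "an i = - a i" by (auto simp: ap_def an_def)
    then show ?thesis using False by (simp add: cf_def)
  qed
  have cf0: "0 \<le> cf i" for i using apan(3,4)[of i] N0 P1 by (simp add: cf_def)
  have pt: "\<bar>wigner n \<rho> \<alpha> - g \<alpha>\<bar> \<le> (\<Sum>i<k. cf i * \<bar>wigner n (\<sigma> i) \<alpha>\<bar>)" if "\<alpha> \<in> PS" for \<alpha>
  proof -
    have l: "length \<alpha> = n" using that by (simp add: PS_def phase_space_def)
    have "wigner n \<rho> \<alpha> - g \<alpha> = (\<Sum>i<k. (a i - ap i / P) * wigner n (\<sigma> i) \<alpha>)"
      unfolding wigner_lin[OF Rc Sc e l] g_def by (simp add: sum_subtractf left_diff_distrib)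
    then have "\<bar>wigner n \<rho> \<alpha> - g \<alpha>\<bar> \<le> (\<Sum>i<k. \<bar>(a i - ap i / P) * wigner n (\<sigma> i) \<alpha>\<bar>)"
      by (simp add: sum_abs)
    also have "\<dots> \<le> (\<Sum>i<k. cf i * \<bar>wigner n (\<sigma> i) \<alpha>\<bar>)"
      by (rule sum_mono) (simp add: abs_mult coef mult_right_mono)
    finally show ?thesis .
  qed
  have "l1_dist n (wigner n \<rho>) g \<le> (\<Sum>\<alpha>\<in>PS. \<Sum>i<k. cf i * \<bar>wigner n (\<sigma> i) \<alpha>\<bar>)"
    unfolding l1_dist_def PS_def[symmetric] using pt by (rule sum_mono)
  also have "\<dots> = (\<Sum>i<k. cf i * (\<Sum>\<alpha>\<in>PS. \<bar>wigner n (\<sigma> i) \<alpha>\<bar>))"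
    by (simp add: sum.swap[of _ PS] sum_distrib_left)
  also have "\<dots> \<le> (\<Sum>i<k. cf i * M)"
    by (rule sum_mono) (use Mi cf0 in \<open>simp add: mult_left_mono\<close>)
  also have "\<dots> = M * (\<Sum>i<k. cf i)" unfolding sum_distrib_left by (simp add: mult.commute)
  also have "(\<Sum>i<k. cf i) = P * (N / P) + N"
    unfolding cf_def P_def N_def by (simp add: sum.distrib sum_distrib_right sum_divide_distrib)
  also have "P * (N / P) + N = 2 * N" using P1 by simp
  finally have CB: "wigner_distance n \<rho> \<le> M * (2 * N)" using C_le by linarith
  have "1 + wigner_distance n \<rho> / M \<le> (\<Sum>i<k. \<bar>a i\<bar>)"
  proof (cases "M = 0")
    case True
    have "1 \<le> (\<Sum>i<k. \<bar>a i\<bar>)" using sum_abs[of a "{..<k}"] sa by simp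
    then show ?thesis using True by simp
  next
    case False
    then have "M > 0" using M0 by simp
    then have "wigner_distance n \<rho> / M \<le> 2 * N" using CB by (simp add: divide_le_eq mult.commute)
    then show ?thesis using PN2 PN by simp
  qed
  then show ?thesis using C0 M0 unfolding M_def by simp
qed

theorem theorem3p3:
  fixes n :: nat and \<rho> :: "complex mat"
  assumes "density_op n \<rho>"
  shows "stab_extent n \<rho> \<ge> 1 + wigner_distance n \<rho> / M_max n
    \<and> (stab_extent n \<rho>)\<^sup>2 \<ge> (1 + wigner_distance n \<rho> / M_max n)\<^sup>2"
proof -
  define E where "E = {(\<Sum>i<k. \<bar>a i\<bar>) | k (a :: nat \<Rightarrow> real) \<sigma>.
       (\<forall>i<k. stab_state n (\<sigma> i))
     \<and> (\<forall>r<2^n. \<forall>s<2^n. \<rho> $$ (r,s) = (\<Sum>i<k. complex_of_real (a i) * \<sigma> i $$ (r,s)))}"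
  have SE: "stab_extent n \<rho> = Inf E" unfolding stab_extent_def E_def ..
  obtain k :: nat and a :: "nat \<Rightarrow> real" and \<sigma> where d0: "\<forall>i<k. stab_state n (\<sigma> i)"
    "\<forall>r<2^n. \<forall>s<2^n. \<rho> $$ (r,s) = (\<Sum>i<k. complex_of_real (a i) * \<sigma> i $$ (r,s))"
    using decomp_exists[OF assms] by (elim exE conjE) (rule that; assumption)
  have "(\<Sum>i<k. \<bar>a i\<bar>) \<in> E" unfolding E_def mem_Collect_eq
    by (intro exI[where x=k] exI[where x=a] exI[where x=\<sigma>]) (use d0 in simp)
  then have En: "E \<noteq> {}" by blast
  have nn: "0 \<le> wigner_distance n \<rho>" "0 \<le> M_max n" using key_bound[OF assms d0] by auto
  have lb: "1 + wigner_distance n \<rho> / M_max n \<le> stab_extent n \<rho>"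
    unfolding SE
  proof (rule cInf_greatest[OF En])
    fix x assume "x \<in> E"
    then have "\<exists>(k'::nat) (a'::nat \<Rightarrow> real) \<sigma>'. x = (\<Sum>i<k'. \<bar>a' i\<bar>) \<and> (\<forall>i<k'. stab_state n (\<sigma>' i)) \<and>
      (\<forall>r<2^n. \<forall>s<2^n. \<rho> $$ (r,s) = (\<Sum>i<k'. complex_of_real (a' i) * \<sigma>' i $$ (r,s)))"
      unfolding E_def by (simp only: mem_Collect_eq)
    then obtain k' :: nat and a' :: "nat \<Rightarrow> real" and \<sigma>' where x: "x = (\<Sum>i<k'. \<bar>a' i\<bar>)" and d: "\<forall>i<k'. stab_state n (\<sigma>' i)"
      "\<forall>r<2^n. \<forall>s<2^n. \<rho> $$ (r,s) = (\<Sum>i<k'. complex_of_real (a' i) * \<sigma>' i $$ (r,s))"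
      by (elim exE conjE) (rule that; assumption)
    show "1 + wigner_distance n \<rho> / M_max n \<le> x" using key_bound[OF assms d] x by simp
  qed
  have nn1: "0 \<le> 1 + wigner_distance n \<rho> / M_max n" using nn by simp
  have "(1 + wigner_distance n \<rho> / M_max n)\<^sup>2 \<le> (stab_extent n \<rho>)\<^sup>2"
    by (rule power_mono[OF lb nn1])
  then show ?thesis using lb by simp
qed


end
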